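(* Suppose $d\ge 8$, $S\ge d+1$, $A\ge d-3$ and $K\ge 2(d-4)A$. Then for any learning algorithm $\mathrm{Alg}$ there exists an episodic infinite-horizon low-rank MDP $\mathcal M_{\mathrm{Alg}}$ of rank $d$ with $S$ states, $A$ actions and a fixed loss function (the same in every episode) such that the expected regret of $\mathrm{Alg}$ over $K$ episodes on $\mathcal M_{\mathrm{Alg}}$ is $\Omega\!\left(\frac{\gamma^2}{1-\gamma}\sqrt{dAK}\right)$.
   Context: An episodic infinite-horizon discounted MDP has state space $\mathcal S$ with $|\mathcal S|=S$, action space $\mathcal A$ with $|\mathcal A|=A$, transition kernel $P^\star$, discount factor $\gamma\in[0,1)$, initial distribution $d_0$, and losses $\ell_k:\mathcal S\times\mathcal A\to[0,1]$ (here $\ell_k=\ell$ for all $k$). It is a low-rank MDP of rank $d$ if there exist $\phi^\star:\mathcal S\times\mathcal A\to\mathbb R^d$ and $\mu^\star:\mathcal S\to\mathbb R^d$ with $P^\star(s'\mid s,a)=\mu^\star(s')^\top\phi^\star(s,a)$, $\|\phi^\star(s,a)\|_2\le 1$, and $\|\int\mu^\star(s)g(s)\,ds\|_2\le\sqrt d$ for all $g:\mathcal S\to[0,1]$; the features are unknown to the learner. In each episode $k=1,\dots,K$ the learner chooses a stochastic policy $\pi_k$, starts at $s_0\sim d_0$ and acts with $\pi_k$. With $V_k^\pi=\mathbb E_{s_0\sim d_0}\mathbb E[\sum_{\tau\ge0}\gamma^\tau\ell_k(s_\tau,a_\tau)\mid\pi,P^\star,s_0]$, the expected regret is $\mathcal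 R_K=\mathbb E[\sum_{k=1}^K(V_k^{\pi_k}-V_k^{\pi^\star})]$, where $\pi^\star\in\arg\min_\pi\mathbb E[\sum_{k=1}^K V_k^\pi]$ over all stochastic policies. *)

theory Defs
  imports "HOL-Probability.Probability"
begin

text \<open>
Finite tabular encoding: states are the naturals below S, actions the naturals below A.
A transition kernel is P s a s', a stochastic policy is pol s a, a loss is l s a,
an initial distribution is d0 s.
\<close>

type_synonym kernel = "nat \<Rightarrow> nat \<Rightarrow> nat \<Rightarrow> real"
type_synonym policy = "nat \<Rightarrow> nat \<Rightarrow> real"
type_synonym loss = "nat \<Rightarrow> nat \<Rightarrow> real"
type_synonym trajectory = "nat \<Rightarrow> nat \<times> nat"

definition is_distr :: "nat \<Rightarrow> (nat \<Rightarrow> real) \<Rightarrow> bool" where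
  "is_distr n p \<longleftrightarrow> (\<forall>i<n. 0 \<le> p i) \<and> (\<Sum>i<n. p i) = 1"

definition stoch_policy :: "nat \<Rightarrow> nat \<Rightarrow> policy \<Rightarrow> bool" where
  "stoch_policy S A pol \<longleftrightarrow> (\<forall>s<S. is_distr A (pol s))"

definition valid_mdp :: "nat \<Rightarrow> nat \<Rightarrow> kernel \<Rightarrow> (nat \<Rightarrow> real) \<Rightarrow> loss \<Rightarrow> bool" where
  "valid_mdp S A P d0 l \<longleftrightarrow>
     (\<forall>s<S. \<forall>a<A. is_distr S (P s a)) \<and> is_distr S d0 \<and>
     (\<forall>s<S. \<forall>a<A. 0 \<le> l s a \<and> l s a \<le> 1)"

definition low_rank :: "nat \<Rightarrow> nat \<Rightarrow> nat \<Rightarrow> kernel \<Rightarrow> bool" where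
  "low_rank d S A P \<longleftrightarrow>
     (\<exists>(phi :: nat \<Rightarrow> nat \<Rightarrow> nat \<Rightarrow> real) (mu :: nat \<Rightarrow> nat \<Rightarrow> real).
        (\<forall>s<S. \<forall>a<A. \<forall>s'<S. P s a s' = (\<Sum>i<d. mu s' i * phi s a i)) \<and>
        (\<forall>s<S. \<forall>a<A. sqrt (\<Sum>i<d. (phi s a i)\<^sup>2) \<le> 1) \<and>
        (\<forall>g :: nat \<Rightarrow> real. (\<forall>s<S. 0 \<le> g s \<and> g s \<le> 1) \<longrightarrow>
            sqrt (\<Sum>i<d. (\<Sum>s<S. mu s i * g s)\<^sup>2) \<le> sqrt (real d)))"

primrec state_dist :: "nat \<Rightarrow> nat \<Rightarrow> kernel \<Rightarrow> (nat \<Rightarrow> real) \<Rightarrow> policy \<Rightarrow> nat \<Rightarrow> nat \<Rightarrow> real" where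
  "state_dist S A P d0 pol 0 = d0"
| "state_dist S A P d0 pol (Suc t) =
     (\<lambda>s'. \<Sum>s<S. \<Sum>a<A. state_dist S A P d0 pol t s * pol s a * P s a s')"

definition value_fn :: "nat \<Rightarrow> nat \<Rightarrow> kernel \<Rightarrow> (nat \<Rightarrow> real) \<Rightarrow> loss \<Rightarrow> real \<Rightarrow> policy \<Rightarrow> real" where
  "value_fn S A P d0 l \<gamma> pol =
     (\<Sum>t. \<gamma> ^ t * (\<Sum>s<S. \<Sum>a<A. state_dist S A P d0 pol t s * pol s a * l s a))"

text \<open>Sampling an index below n from the distribution p using a uniform number x in [0,1]
  (inverse-CDF method).\<close>
definition smp :: "(nat \<Rightarrow> real) \<Rightarrow> nat \<Rightarrow> real \<Rightarrow> nat" where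
  "smp p n x = (if \<exists>i<n. x < (\<Sum>j\<le>i. p j) then (LEAST i. x < (\<Sum>j\<le>i. p j)) else 0)"

text \<open>Infinite trajectory of one episode driven by uniform seeds u: u 0 draws s_0,
  u (2t+1) draws a_t, u (2t+2) draws s_{t+1}.\<close>
primrec traj_state :: "nat \<Rightarrow> nat \<Rightarrow> kernel \<Rightarrow> (nat \<Rightarrow> real) \<Rightarrow> policy \<Rightarrow> (nat \<Rightarrow> real) \<Rightarrow> nat \<Rightarrow> nat" where
  "traj_state S A P d0 pol u 0 = smp d0 S (u 0)"
| "traj_state S A P d0 pol u (Suc t) =
     (let s = traj_state S A P d0 pol u t
      in smp (P s (smp (pol s) A (u (2 * t + 1)))) S (u (2 * t + 2)))"

definition traj :: "nat \<Rightarrow> nat \<Rightarrow> kernel \<Rightarrow> (nat \<Rightarrow> real) \<Rightarrow> policy \<Rightarrow> (nat \<Rightarrow> real) \<Rightarrow> trajectory" where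
  "traj S A P d0 pol u t =
     (let s = traj_state S A P d0 pol u t in (s, smp (pol s) A (u (2 * t + 1))))"

text \<open>A learning algorithm: for episode k (0-based) it maps
  (internal random seed, trajectories of episodes < k, losses revealed after episodes < k)
  to a policy. Entries at indices \<ge> k of the history are masked.\<close>
type_synonym algorithm =
  "nat \<Rightarrow> real \<times> (nat \<Rightarrow> trajectory) \<times> (nat \<Rightarrow> loss) \<Rightarrow> policy"

definition alg_input_space :: "(real \<times> (nat \<Rightarrow> trajectory) \<times> (nat \<Rightarrow> loss)) measure" where
  "alg_input_space =
     borel \<Otimes>\<^sub>M (PiM UNIV (\<lambda>_. PiM UNIV (\<lambda>_. count_space UNIV)))
           \<Otimes>\<^sub>M (PiM UNIV (\<lambda>_. PiM UNIV (\<lambda>_. PiM UNIV (\<lambda>_. borel))))"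

definition valid_alg :: "nat \<Rightarrow> nat \<Rightarrow> algorithm \<Rightarrow> bool" where
  "valid_alg S A Alg \<longleftrightarrow>
     (\<forall>k x. stoch_policy S A (Alg k x)) \<and>
     (\<forall>k s a. (\<lambda>x. Alg k x s a) \<in> borel_measurable alg_input_space)"

text \<open>Probability space of all randomness: i.i.d. uniform [0,1] seeds indexed by nat \<times> nat.
  Seed (0,0) is the algorithm's internal randomness; row Suc k drives episode k.\<close>
definition seed_space :: "(nat \<times> nat \<Rightarrow> real) measure" where
  "seed_space = PiM UNIV (\<lambda>_. uniform_measure lborel {0..1::real})"

primrec run :: "nat \<Rightarrow> nat \<Rightarrow> kernel \<Rightarrow> (nat \<Rightarrow> real) \<Rightarrow> loss \<Rightarrow> algorithm \<Rightarrow>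
                 nat \<Rightarrow> (nat \<times> nat \<Rightarrow> real) \<Rightarrow> (policy \<times> trajectory) list" where
  "run S A P d0 l Alg 0 \<omega> = []"
| "run S A P d0 l Alg (Suc k) \<omega> =
     (let h = run S A P d0 l Alg k \<omega>;
          H = (\<lambda>j. if j < length h then snd (h ! j) else (\<lambda>_. (0, 0)));
          L = (\<lambda>j. if j < length h then l else (\<lambda>_ _. 0));
          pol = Alg k (\<omega> (0, 0), H, L)
      in h @ [(pol, traj S A P d0 pol (\<lambda>t. \<omega> (Suc k, t)))])"

definition regret :: "nat \<Rightarrow> nat \<Rightarrow> kernel \<Rightarrow> (nat \<Rightarrow> real) \<Rightarrow> loss \<Rightarrow> real \<Rightarrow>
                      algorithm \<Rightarrow> nat \<Rightarrow> real" where
  "regret S A P d0 l \<gamma> Alg K =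
     (let Vstar = (INF pol \<in> {pol. stoch_policy S A pol}. value_fn S A P d0 l \<gamma> pol)
      in \<integral>\<omega>. (\<Sum>k<K. value_fn S A P d0 l \<gamma> (fst (run S A P d0 l Alg K \<omega> ! k)) - Vstar)
           \<partial>seed_space)"

end

theory Submission
  imports Defs
begin


definition U :: "real measure" where "U = uniform_measure lborel {0..1::real}"
definition mrg :: "(nat \<times> nat) set \<Rightarrow> (nat \<times> nat \<Rightarrow> real) \<Rightarrow> (nat \<times> nat \<Rightarrow> real) \<Rightarrow> (nat \<times> nat \<Rightarrow> real)"
  where "mrg I \<omega> r = (\<lambda>i. if i \<in> I then r i else \<omega> i)"

lemma prob_U: "prob_space U"
  unfolding U_def by (rule prob_space_uniform_measure) auto

lemma sets_U[measurable_cong]: "sets U = sets borel"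
  unfolding U_def by simp

lemma space_U[simp]: "space U = UNIV"
  unfolding U_def by simp

lemma seed_U: "seed_space = PiM UNIV (\<lambda>_. U)"
  unfolding seed_space_def U_def ..

lemma prob_seed: "prob_space seed_space"
  unfolding seed_U by (intro prob_space_PiM prob_U)

lemma space_seed[simp]: "space seed_space = UNIV"
  unfolding seed_U by (auto simp: space_PiM)

lemma distr_mrg: "distr (seed_space \<Otimes>\<^sub>M seed_space) seed_space (\<lambda>(\<omega>,r). mrg I \<omega> r) = seed_space"
proof -
  interpret S: prob_space seed_space by (rule prob_seed)
  interpret UU: prob_space U by (rule prob_U)
  interpret P: pair_sigma_finite seed_space seed_space by unfold_locales
  have mm: "(\<lambda>(\<omega>,r). mrg I \<omega> r) \<in> measurable (seed_space \<Otimes>\<^sub>M seed_space) seed_space"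
    unfolding seed_U mrg_def
    apply (rule measurable_PiM_single')
    subgoal for i
      by (cases "i \<in> I") (auto intro!: measurable_compose[OF measurable_snd measurable_component_singleton]
                measurable_compose[OF measurable_fst measurable_component_singleton] simp: split_beta')
    by (auto simp: space_PiM)
  show ?thesis
  proof (rule measure_eqI_PiM_infinite[symmetric, OF _ _ _ S.finite_measure_axioms])
    show "sets seed_space = sets (PiM UNIV (\<lambda>_. U))" by (simp add: seed_U)
    show "sets (distr (seed_space \<Otimes>\<^sub>M seed_space) seed_space (\<lambda>(\<omega>,r). mrg I \<omega> r)) = sets (PiM UNIV (\<lambda>_. U))"
      by (simp add: seed_U)
    fix A J assume J: "finite (J::(nat\<times>nat) set)" "J \<subseteq> UNIV" and A: "\<And>i. i \<in> J \<Longrightarrow> A i \<in> sets U"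
    let ?X = "prod_emb UNIV (\<lambda>_. U) J (Pi\<^sub>E J A)"
    let ?X1 = "prod_emb UNIV (\<lambda>_. U) (J - I) (Pi\<^sub>E (J - I) A)"
    let ?X2 = "prod_emb UNIV (\<lambda>_. U) (J \<inter> I) (Pi\<^sub>E (J \<inter> I) A)"
    have e: "emeasure seed_space ?X = (\<Prod>i\<in>J. emeasure U (A i))"
      unfolding seed_U using J A by (intro emeasure_PiM_emb prob_U) auto
    have e1: "emeasure seed_space ?X1 = (\<Prod>i\<in>J-I. emeasure U (A i))"
      unfolding seed_U using J A by (intro emeasure_PiM_emb prob_U) auto
    have e2: "emeasure seed_space ?X2 = (\<Prod>i\<in>J\<inter>I. emeasure U (A i))"
      unfolding seed_U using J A by (intro emeasure_PiM_emb prob_U) auto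
    have s1: "?X1 \<in> sets seed_space" unfolding seed_U using J A by (intro sets_PiM_I) auto
    have s2: "?X2 \<in> sets seed_space" unfolding seed_U using J A by (intro sets_PiM_I) auto
    have pre: "(\<lambda>(\<omega>,r). mrg I \<omega> r) -` ?X \<inter> space (seed_space \<Otimes>\<^sub>M seed_space) = ?X1 \<times> ?X2"
      by (auto simp: prod_emb_def space_pair_measure mrg_def PiE_iff restrict_def extensional_def split: if_splits)
    have sX: "?X \<in> sets seed_space" unfolding seed_U using J A by (intro sets_PiM_I) auto
    have "emeasure (distr (seed_space \<Otimes>\<^sub>M seed_space) seed_space (\<lambda>(\<omega>,r). mrg I \<omega> r)) ?X
        = emeasure (seed_space \<Otimes>\<^sub>M seed_space) (?X1 \<times> ?X2)"
      using sX mm by (simp add: emeasure_distr pre)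
    also have "\<dots> = emeasure seed_space ?X1 * emeasure seed_space ?X2"
      using s1 s2 by (rule S.emeasure_pair_measure_Times)
    also have "\<dots> = (\<Prod>i\<in>J. emeasure U (A i))"
    proof -
      have "J = (J - I) \<union> (J \<inter> I)" by auto
      then have "(\<Prod>i\<in>J. emeasure U (A i)) = (\<Prod>i\<in>(J-I) \<union> (J\<inter>I). emeasure U (A i))" by simp
      also have "\<dots> = (\<Prod>i\<in>J-I. emeasure U (A i)) * (\<Prod>i\<in>J\<inter>I. emeasure U (A i))"
        using J by (intro prod.union_disjoint) auto
      finally show ?thesis using e1 e2 by simp
    qed
    finally show "emeasure seed_space ?X = emeasure (distr (seed_space \<Otimes>\<^sub>M seed_space) seed_space (\<lambda>(\<omega>,r). mrg I \<omega> r)) ?X"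
      using e by simp
  qed
qed

lemma mrg_measurable[measurable]: "(\<lambda>(\<omega>,r). mrg I \<omega> r) \<in> measurable (seed_space \<Otimes>\<^sub>M seed_space) seed_space"
    unfolding seed_U mrg_def
    apply (rule measurable_PiM_single')
    subgoal for i
      by (cases "i \<in> I") (auto intro!: measurable_compose[OF measurable_snd measurable_component_singleton]
                measurable_compose[OF measurable_fst measurable_component_singleton] simp: split_beta')
    by (auto simp: space_PiM)

lemma upd_measurable: "(\<lambda>x. fun_upd \<omega> i (x)) \<in> measurable U seed_space"
  unfolding seed_U
  apply (rule measurable_PiM_single')
  subgoal for j by (cases "j = i") auto
  by (auto simp: space_PiM)

lemma integrable_bnd:
  fixes f :: "_ \<Rightarrow> real"
  assumes "prob_space M" "f \<in> borel_measurable M" "\<And>x. \<bar>f x\<bar> \<le> B"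
  shows "integrable M f"
proof -
  interpret prob_space M by fact
  show ?thesis using assms by (intro integrable_const_bound[of _ B]) auto
qed

lemma int_mrg:
  fixes f :: "_ \<Rightarrow> real"
  assumes f: "f \<in> borel_measurable seed_space" and B: "\<And>\<omega>. \<bar>f \<omega>\<bar> \<le> B"
  shows "(\<integral>\<omega>. f \<omega> \<partial>seed_space) = (\<integral>\<omega>. (\<integral>r. f (mrg I \<omega> r) \<partial>seed_space) \<partial>seed_space)"
proof -
  interpret S: prob_space seed_space by (rule prob_seed)
  interpret P: pair_sigma_finite seed_space seed_space by unfold_locales
  interpret PP: prob_space "seed_space \<Otimes>\<^sub>M seed_space" by (intro prob_space_pair prob_seed)
  have fm: "(\<lambda>z. f (case z of (\<omega>, r) \<Rightarrow> mrg I \<omega> r)) \<in> borel_measurable (seed_space \<Otimes>\<^sub>M seed_space)"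
    by (rule measurable_compose[OF mrg_measurable f])
  have "(\<integral>\<omega>. f \<omega> \<partial>seed_space) = (\<integral>\<omega>. f \<omega> \<partial>distr (seed_space \<Otimes>\<^sub>M seed_space) seed_space (\<lambda>(\<omega>,r). mrg I \<omega> r))"
    by (simp add: distr_mrg)
  also have "\<dots> = (\<integral>z. f (case z of (\<omega>, r) \<Rightarrow> mrg I \<omega> r) \<partial>(seed_space \<Otimes>\<^sub>M seed_space))"
    by (rule integral_distr[OF mrg_measurable f])
  also have "\<dots> = (\<integral>\<omega>. (\<integral>r. f (mrg I \<omega> r) \<partial>seed_space) \<partial>seed_space)"
  proof -
    have i: "integrable (seed_space \<Otimes>\<^sub>M seed_space) (\<lambda>z. f (case z of (\<omega>, r) \<Rightarrow> mrg I \<omega> r))"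
      by (rule integrable_bnd[OF PP.prob_space_axioms fm], use B in auto)
    show ?thesis using P.integral_fst'[OF i] by (simp add: split_beta')
  qed
  finally show ?thesis .
qed

lemma mrg_single: "mrg {i} \<omega> r = fun_upd \<omega> i (r i)"
  by (auto simp: mrg_def)

lemma int_upd:
  fixes f :: "_ \<Rightarrow> real"
  assumes f: "f \<in> borel_measurable seed_space" and B: "\<And>\<omega>. \<bar>f \<omega>\<bar> \<le> B"
  shows "(\<integral>\<omega>. f \<omega> \<partial>seed_space) = (\<integral>\<omega>. (\<integral>x. f (fun_upd \<omega> i (x)) \<partial>U) \<partial>seed_space)"
proof -
  have "(\<integral>\<omega>. f \<omega> \<partial>seed_space) = (\<integral>\<omega>. (\<integral>r. f (fun_upd \<omega> i (r i)) \<partial>seed_space) \<partial>seed_space)"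
    using int_mrg[OF f B, of "{i}"] by (simp add: mrg_single)
  also have "\<dots> = (\<integral>\<omega>. (\<integral>x. f (fun_upd \<omega> i (x)) \<partial>U) \<partial>seed_space)"
  proof (rule Bochner_Integration.integral_cong[OF refl])
    fix \<omega>
    have d: "distr seed_space U (\<lambda>r. r i) = U"
      unfolding seed_U by (rule distr_PiM_component) (auto intro: prob_U)
    have m: "(\<lambda>x. f (fun_upd \<omega> i (x))) \<in> borel_measurable U"
      by (rule measurable_compose[OF upd_measurable f])
    have "(\<integral>x. f (fun_upd \<omega> i (x)) \<partial>U) = (\<integral>x. f (fun_upd \<omega> i (x)) \<partial>distr seed_space U (\<lambda>r. r i))"
      by (simp add: d)
    also have "\<dots> = (\<integral>r. f (fun_upd \<omega> i (r i)) \<partial>seed_space)"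
      by (rule integral_distr) (auto simp: seed_U intro: m)
    finally show "(\<integral>r. f (fun_upd \<omega> i (r i)) \<partial>seed_space) = (\<integral>x. f (fun_upd \<omega> i (x)) \<partial>U)" by simp
  qed
  finally show ?thesis .
qed

lemma cum_mono:
  assumes "\<forall>i<n. 0 \<le> (p::nat\<Rightarrow>real) i" "j \<le> j'" "j' < n"
  shows "(\<Sum>k\<le>j. p k) \<le> (\<Sum>k\<le>j'. p k)"
  using assms by (intro sum_mono2) auto

lemma cum_lt: "(\<Sum>k<Suc j. p k) = (\<Sum>k\<le>j. (p::nat\<Rightarrow>real) k)"
  by (simp add: lessThan_Suc_atMost)

lemma smp_char:
  assumes d: "is_distr n p" and x: "0 \<le> x" "x < 1" and i: "i < n"
  shows "smp p n x = i \<longleftrightarrow> ((\<Sum>j<i. p j) \<le> x \<and> x < (\<Sum>j\<le>i. p j))"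
proof -
  have nn: "\<forall>i<n. 0 \<le> p i" and s1: "(\<Sum>i<n. p i) = 1" using d by (auto simp: is_distr_def)
  have n0: "n > 0" using i by simp
  have cn: "(\<Sum>j\<le>n-1. p j) = 1" using s1 n0 by (metis Suc_diff_1 cum_lt)
  have ex: "\<exists>i<n. x < (\<Sum>j\<le>i. p j)" using cn x n0 by (intro exI[of _ "n-1"]) auto
  define L where "L = (LEAST i. x < (\<Sum>j\<le>i. p j))"
  have sm: "smp p n x = L" using ex by (simp add: smp_def L_def)
  have L1: "x < (\<Sum>j\<le>L. p j)" unfolding L_def using ex by (metis LeastI_ex)
  have L2: "\<And>j. j < L \<Longrightarrow> \<not> x < (\<Sum>k\<le>j. p k)" unfolding L_def using not_less_Least by blast
  have Ln: "L < n" using ex L2 by (meson not_less_eq_eq order.strict_trans1 not_le)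
  show ?thesis
  proof
    assume "smp p n x = i"
    then have Li: "L = i" using sm by simp
    show "(\<Sum>j<i. p j) \<le> x \<and> x < (\<Sum>j\<le>i. p j)"
    proof
      show "(\<Sum>j<i. p j) \<le> x"
      proof (cases i)
        case 0 then show ?thesis using x by simp
      next
        case (Suc i') then show ?thesis using L2[of i'] Li by (simp add: lessThan_Suc_atMost)
      qed
      show "x < (\<Sum>j\<le>i. p j)" using L1 Li by simp
    qed
  next
    assume h: "(\<Sum>j<i. p j) \<le> x \<and> x < (\<Sum>j\<le>i. p j)"
    have "L \<le> i" unfolding L_def using h by (simp add: Least_le)
    moreover have "\<not> L < i"
    proof
      assume "L < i"
      then obtain i' where i': "i = Suc i'" "L \<le> i'" by (cases i) auto
      have "(\<Sum>j\<le>L. p j) \<le> (\<Sum>j\<le>i'. p j)" using cum_mono[OF nn i'(2)] i i' by simp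
      then show False using h L1 i' by (simp add: lessThan_Suc_atMost)
    qed
    ultimately show "smp p n x = i" using sm by simp
  qed
qed

lemma smp_lt:
  assumes d: "is_distr n p" and x: "0 \<le> x" "x < 1"
  shows "smp p n x < n"
proof -
  have s1: "(\<Sum>i<n. p i) = 1" using d by (auto simp: is_distr_def)
  then have n0: "n > 0" by (cases n) auto
  have cn: "(\<Sum>j\<le>n-1. p j) = 1" using s1 n0 by (metis Suc_diff_1 cum_lt)
  have ex: "\<exists>i<n. x < (\<Sum>j\<le>i. p j)" using cn x n0 by (intro exI[of _ "n-1"]) auto
  have "(LEAST i. x < (\<Sum>j\<le>i. p j)) \<le> n - 1" using cn x by (intro Least_le) simp
  then show ?thesis using ex n0 by (simp add: smp_def)
qed

lemma smp_lt_gen: "0 < n \<Longrightarrow> smp p n x < n"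
proof -
  assume n: "0 < n"
  show ?thesis
  proof (cases "\<exists>i<n. x < (\<Sum>j\<le>i. p j)")
    case True
    then obtain i where "i < n" "x < (\<Sum>j\<le>i. p j)" by blast
    then have "(LEAST i. x < (\<Sum>j\<le>i. p j)) \<le> i" by (intro Least_le)
    then show ?thesis using True \<open>i < n\<close> by (simp add: smp_def)
  next
    case False then show ?thesis using n unfolding smp_def by auto
  qed
qed

lemma Least_eq_iff_nat:
  assumes "\<exists>i::nat. P i"
  shows "(LEAST i. P i) = a \<longleftrightarrow> P a \<and> (\<forall>j<a. \<not> P j)"
  using assms by (metis LeastI_ex Least_equality linorder_not_le not_less_Least)

lemma smp_meas[measurable]:
  assumes p[measurable]: "\<And>i. (\<lambda>\<omega>. p \<omega> i) \<in> borel_measurable M" and x[measurable]: "x \<in> borel_measurable M"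
  shows "(\<lambda>\<omega>. smp (p \<omega>) n (x \<omega>)) \<in> measurable M (count_space UNIV)"
proof -
  have c[measurable]: "(\<lambda>\<omega>. (\<Sum>j\<le>i. p \<omega> j)) \<in> borel_measurable M" for i by measurable
  have eq: "smp (p \<omega>) n (x \<omega>) = a \<longleftrightarrow>
     ((\<exists>i<n. x \<omega> < (\<Sum>j\<le>i. p \<omega> j)) \<and> x \<omega> < (\<Sum>j\<le>a. p \<omega> j) \<and> (\<forall>j<a. \<not> x \<omega> < (\<Sum>k\<le>j. p \<omega> k)))
     \<or> ((\<not> (\<exists>i<n. x \<omega> < (\<Sum>j\<le>i. p \<omega> j))) \<and> a = 0)" for \<omega> a
  proof (cases "\<exists>i<n. x \<omega> < (\<Sum>j\<le>i. p \<omega> j)")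
    case True
    then have "\<exists>i. x \<omega> < (\<Sum>j\<le>i. p \<omega> j)" by blast
    then show ?thesis using True by (simp add: smp_def Least_eq_iff_nat)
  next
    case False then show ?thesis by (auto simp: smp_def)
  qed
  have "{\<omega> \<in> space M. smp (p \<omega>) n (x \<omega>) = a} \<in> sets M" for a
    unfolding eq by measurable
  then show ?thesis
    unfolding measurable_count_space_eq2_countable by (auto simp: vimage_def Int_def conj_commute)
qed

lemma measure_U_Ico:
  assumes "0 \<le> a" "a \<le> b" "b \<le> 1"
  shows "measure U {a..<b} = b - a"
proof -
  have "measure U {a..<b} = measure lborel ({0..1} \<inter> {a..<b}) / measure lborel {0..1::real}"
    unfolding U_def by (rule measure_uniform_measure) auto
  also have "{0..1} \<inter> {a..<b} = {a..<b}" using assms by auto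
  finally show ?thesis using assms by simp
qed

lemma int_smp:
  fixes g :: "nat \<Rightarrow> real"
  assumes d: "is_distr n p"
  shows "(\<integral>x. g (smp p n x) \<partial>U) = (\<Sum>i<n. p i * g i)"
proof -
  have nn: "\<forall>i<n. 0 \<le> p i" and s1: "(\<Sum>i<n. p i) = 1" using d by (auto simp: is_distr_def)
  interpret UU: prob_space U by (rule prob_U)
  let ?a = "\<lambda>i. (\<Sum>j<i. p j)" and ?b = "\<lambda>i. (\<Sum>j\<le>i. p j)"
  have ab: "?a i \<le> ?b i" if "i < n" for i using nn that by (simp add: cum_lt[symmetric])
  have a0: "0 \<le> ?a i" if "i < n" for i using nn that by (intro sum_nonneg) auto
  have b1: "?b i \<le> 1" if "i < n" for i
  proof -
    have "?b i \<le> (\<Sum>j<n. p j)" using nn that by (intro sum_mono2) auto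
    then show ?thesis using s1 by simp
  qed
  have ae: "AE x in U. g (smp p n x) = (\<Sum>i<n. g i * indicator {?a i..<?b i} x)"
  proof -
    have "AE x in U. x \<in> {0..1} \<and> x \<noteq> 1"
      unfolding U_def
      by (rule AE_uniform_measureI) (auto intro!: AE_I'[of "{1}"])
    then show ?thesis
    proof eventually_elim
      case (elim x)
      then have x: "0 \<le> x" "x < 1" by auto
      have k: "smp p n x < n" by (rule smp_lt[OF d x])
      have "(\<Sum>i<n. g i * indicator {?a i..<?b i} x) = (\<Sum>i<n. if i = smp p n x then g i else 0)"
        using smp_char[OF d x] by (intro sum.cong) (auto simp: indicator_def)
      also have "\<dots> = g (smp p n x)" using k by simp
      finally show ?case by simp
    qed
  qed
  have "(\<integral>x. g (smp p n x) \<partial>U) = (\<integral>x. (\<Sum>i<n. g i * indicator {?a i..<?b i} x) \<partial>U)"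
  proof (rule integral_cong_AE[OF _ _ ae])
    show "(\<lambda>x. g (smp p n x)) \<in> borel_measurable U"
      by (rule measurable_compose[OF smp_meas[where p="\<lambda>_. p" and x="\<lambda>x. x"]]) (auto simp: sets_U)
    show "(\<lambda>x. \<Sum>i<n. g i * indicator {?a i..<?b i} x) \<in> borel_measurable U"
      unfolding measurable_cong_sets[OF sets_U refl] by measurable
  qed
  also have "\<dots> = (\<Sum>i<n. g i * measure U {?a i..<?b i})"
  proof -
    have "(\<integral>x. (\<Sum>i<n. g i * indicator {?a i..<?b i} x) \<partial>U) = (\<Sum>i<n. (\<integral>x. g i * indicator {?a i..<?b i} x \<partial>U))"
    proof (rule Bochner_Integration.integral_sum[where f="\<lambda>i x. g i * indicator {?a i..<?b i} x"])
      fix i show "integrable U (\<lambda>x. g i * indicator {?a i..<?b i} x)"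
        by (rule integrable_mult_right, rule integrable_real_indicator) (auto simp: sets_U UU.emeasure_space_1 UU.emeasure_finite less_top[symmetric])
    qed
    also have "\<dots> = (\<Sum>i<n. g i * measure U {?a i..<?b i})"
      by (intro sum.cong refl) (simp add: sets_U UU.emeasure_space_1)
    finally show ?thesis .
  qed
  also have "\<dots> = (\<Sum>i<n. p i * g i)"
  proof (intro sum.cong refl)
    fix i assume "i \<in> {..<n}"
    then have i: "i < n" by simp
    have "?b i - ?a i = p i" by (simp add: lessThan_Suc_atMost[symmetric])
    then show "g i * measure U {?a i..<?b i} = p i * g i"
      using measure_U_Ico[OF a0[OF i] ab[OF i] b1[OF i]] by simp
  qed
  finally show ?thesis .
qed

definition Hh :: "(policy \<times> trajectory) list \<Rightarrow> nat \<Rightarrow> trajectory" where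
  "Hh h = (\<lambda>j. if j < length h then snd (h ! j) else (\<lambda>_. (0, 0)))"
definition Lh :: "loss \<Rightarrow> (policy \<times> trajectory) list \<Rightarrow> nat \<Rightarrow> loss" where
  "Lh l h = (\<lambda>j. if j < length h then l else (\<lambda>_ _. 0))"

lemma run_Suc': "run S A P d0 l Alg (Suc k) \<omega> =
   run S A P d0 l Alg k \<omega> @ [(Alg k (\<omega> (0,0), Hh (run S A P d0 l Alg k \<omega>), Lh l (run S A P d0 l Alg k \<omega>)),
       traj S A P d0 (Alg k (\<omega> (0,0), Hh (run S A P d0 l Alg k \<omega>), Lh l (run S A P d0 l Alg k \<omega>))) (\<lambda>t. \<omega> (Suc k, t)))]"
  by (simp add: Let_def Hh_def Lh_def)

lemma length_run[simp]: "length (run S A P d0 l Alg K \<omega>) = K"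
  by (induction K) (simp_all add: Let_def)

lemma run_nth: "k < K \<Longrightarrow> run S A P d0 l Alg K \<omega> ! k = run S A P d0 l Alg (Suc k) \<omega> ! k"
proof (induction K)
  case 0 then show ?case by simp
next
  case (Suc K)
  show ?case
  proof (cases "k < K")
    case True
    then show ?thesis using Suc by (simp add: Let_def nth_append)
  next
    case False
    then have "k = K" using Suc by simp
    then show ?thesis by simp
  qed
qed

lemma run_last: "run S A P d0 l Alg (Suc k) \<omega> ! k =
   (Alg k (\<omega> (0,0), Hh (run S A P d0 l Alg k \<omega>), Lh l (run S A P d0 l Alg k \<omega>)),
       traj S A P d0 (Alg k (\<omega> (0,0), Hh (run S A P d0 l Alg k \<omega>), Lh l (run S A P d0 l Alg k \<omega>))) (\<lambda>t. \<omega> (Suc k, t)))"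
  by (subst run_Suc') (simp add: nth_append)

lemma run_dep:
  assumes "\<omega> (0,0) = \<omega>' (0,0)" "\<And>j t. 1 \<le> j \<Longrightarrow> j \<le> K \<Longrightarrow> \<omega> (j, t) = \<omega>' (j, t)"
  shows "run S A P d0 l Alg K \<omega> = run S A P d0 l Alg K \<omega>'"
  using assms
proof (induction K)
  case 0 then show ?case by simp
next
  case (Suc K)
  have "run S A P d0 l Alg K \<omega> = run S A P d0 l Alg K \<omega>'" using Suc by auto
  moreover have "(\<lambda>t. \<omega> (Suc K, t)) = (\<lambda>t. \<omega>' (Suc K, t))" using Suc.prems by auto
  ultimately show ?case using Suc.prems by (simp only: run_Suc')
qed

definition rowset :: "nat \<Rightarrow> (nat \<times> nat) set" where "rowset j = {j} \<times> UNIV"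

lemma run_mrg: "run S A P d0 l Alg K (mrg (rowset (Suc K)) \<omega> r) = run S A P d0 l Alg K \<omega>"
  by (rule run_dep) (auto simp: mrg_def rowset_def)

lemma mrg_row: "(\<lambda>t. mrg (rowset j) \<omega> r (j, t)) = (\<lambda>t. r (j, t))"
  by (auto simp: mrg_def rowset_def)

lemma mrg_00: "mrg (rowset (Suc K)) \<omega> r (0,0) = \<omega> (0,0)"
  by (auto simp: mrg_def rowset_def)

section \<open>Measurability of run\<close>

lemma count_pair_meas:
  assumes "(f::_\<Rightarrow>'a::countable) \<in> measurable M (count_space UNIV)" "(g::_\<Rightarrow>'b::countable) \<in> measurable M (count_space UNIV)"
  shows "(\<lambda>x. (f x, g x)) \<in> measurable M (count_space UNIV)"
proof -
  have "(\<lambda>x. (f x, g x)) -` {(a,b)} \<inter> space M = (f -` {a} \<inter> space M) \<inter> (g -` {b} \<inter> space M)" for a b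
    by auto
  then show ?thesis using assms unfolding measurable_count_space_eq2_countable
    by (auto intro!: sets.Int)
qed

lemma count_to_any: 
  fixes f :: "_ \<Rightarrow> 'a::countable"
  assumes "f \<in> measurable M (count_space UNIV)"
  shows "(\<lambda>x. h (f x)) \<in> measurable M (count_space UNIV)"
  by (rule measurable_compose[OF assms]) simp

lemma count_to_borel:
  fixes f :: "_ \<Rightarrow> 'a::countable" and h :: "'a \<Rightarrow> real"
  assumes "f \<in> measurable M (count_space UNIV)"
  shows "(\<lambda>x. h (f x)) \<in> borel_measurable M"
  by (rule measurable_compose[OF assms]) simp

lemma seed_comp[measurable]: "(\<lambda>\<omega>. \<omega> i) \<in> borel_measurable seed_space"
  unfolding seed_U by (simp add: measurable_cong_sets[OF refl sets_U[symmetric]])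

lemma traj_state_meas:
  assumes pol: "\<And>s a. (\<lambda>\<omega>. pol \<omega> s a) \<in> borel_measurable M"
    and u: "\<And>t. (\<lambda>\<omega>. u \<omega> t) \<in> borel_measurable M"
  shows "(\<lambda>\<omega>. traj_state S A P d0 (pol \<omega>) (u \<omega>) t) \<in> measurable M (count_space UNIV)"
proof (induction t)
  case 0
  show ?case by (simp, rule smp_meas[where p="\<lambda>_. d0"], auto intro: u)
next
  case (Suc t)
  let ?s = "\<lambda>\<omega>. traj_state S A P d0 (pol \<omega>) (u \<omega>) t"
  have a: "(\<lambda>\<omega>. smp (pol \<omega> (?s \<omega>)) A (u \<omega> (2 * t + 1))) \<in> measurable M (count_space UNIV)"
    by (rule measurable_compose_countable[where f="\<lambda>s \<omega>. smp (pol \<omega> s) A (u \<omega> (2 * t + 1))", OF _ Suc])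
       (rule smp_meas, auto intro: pol u)
  have sa: "(\<lambda>\<omega>. (?s \<omega>, smp (pol \<omega> (?s \<omega>)) A (u \<omega> (2 * t + 1)))) \<in> measurable M (count_space UNIV)"
    by (rule count_pair_meas[OF Suc a])
  have "(\<lambda>\<omega>. (\<lambda>(s, a) \<omega>. smp (P s a) S (u \<omega> (2 * t + 2))) (?s \<omega>, smp (pol \<omega> (?s \<omega>)) A (u \<omega> (2 * t + 1))) \<omega>)
      \<in> measurable M (count_space UNIV)"
    by (rule measurable_compose_countable[OF _ sa]) (auto intro!: smp_meas[where p="\<lambda>_. P _ _"] u)
  then show ?case by (simp add: Let_def)
qed

lemma traj_meas:
  assumes pol: "\<And>s a. (\<lambda>\<omega>. pol \<omega> s a) \<in> borel_measurable M"
    and u: "\<And>t. (\<lambda>\<omega>. u \<omega> t) \<in> borel_measurable M"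
  shows "(\<lambda>\<omega>. traj S A P d0 (pol \<omega>) (u \<omega>) t) \<in> measurable M (count_space UNIV)"
proof -
  let ?s = "\<lambda>\<omega>. traj_state S A P d0 (pol \<omega>) (u \<omega>) t"
  have s: "?s \<in> measurable M (count_space UNIV)" by (rule traj_state_meas[OF pol u])
  have a: "(\<lambda>\<omega>. smp (pol \<omega> (?s \<omega>)) A (u \<omega> (2 * t + 1))) \<in> measurable M (count_space UNIV)"
    by (rule measurable_compose_countable[where f="\<lambda>s \<omega>. smp (pol \<omega> s) A (u \<omega> (2 * t + 1))", OF _ s])
       (rule smp_meas, auto intro: pol u)
  show ?thesis unfolding traj_def Let_def by (rule count_pair_meas[OF s a])
qed

lemma input_meas:
  assumes h: "\<And>j t. j < K \<Longrightarrow> (\<lambda>\<omega>. snd (h \<omega> ! j) t) \<in> measurable seed_space (count_space UNIV)"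
    and len: "\<And>\<omega>. length (h \<omega>) = K"
  shows "(\<lambda>\<omega>. (\<omega> (0,0), Hh (h \<omega>), Lh l (h \<omega>))) \<in> measurable seed_space alg_input_space"
  unfolding alg_input_space_def
proof (intro measurable_Pair)
  show "(\<lambda>\<omega>. \<omega> (0, 0)) \<in> borel_measurable seed_space" by (rule seed_comp)
  show "(\<lambda>\<omega>. Lh l (h \<omega>)) \<in> measurable seed_space (PiM UNIV (\<lambda>_. PiM UNIV (\<lambda>_. PiM UNIV (\<lambda>_. borel))))"
    unfolding Lh_def len by (rule measurable_const) (auto simp: space_PiM)
  show "(\<lambda>\<omega>. Hh (h \<omega>)) \<in> measurable seed_space (PiM UNIV (\<lambda>_. PiM UNIV (\<lambda>_. count_space UNIV)))"
    unfolding Hh_def len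
    apply (rule measurable_PiM_single')
     apply (rule measurable_PiM_single')
    subgoal for j t by (cases "j < K") (auto intro: h)
    by (auto simp: space_PiM)
qed

lemma run_meas:
  assumes va: "valid_alg S A Alg"
  shows "k < K \<Longrightarrow> (\<lambda>\<omega>. fst (run S A P d0 l Alg K \<omega> ! k) s a) \<in> borel_measurable seed_space \<and>
     (\<lambda>\<omega>. snd (run S A P d0 l Alg K \<omega> ! k) t) \<in> measurable seed_space (count_space UNIV)"
proof (induction K arbitrary: k s a t)
  case 0 then show ?case by simp
next
  case (Suc K)
  have algm: "(\<lambda>x. Alg K x s a) \<in> borel_measurable alg_input_space" for s a
    using va by (simp add: valid_alg_def)
  have inp: "(\<lambda>\<omega>. (\<omega> (0,0), Hh (run S A P d0 l Alg K \<omega>), Lh l (run S A P d0 l Alg K \<omega>))) \<in> measurable seed_space alg_input_space"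
    by (rule input_meas) (use Suc.IH in auto)
  have pm: "(\<lambda>\<omega>. Alg K (\<omega> (0,0), Hh (run S A P d0 l Alg K \<omega>), Lh l (run S A P d0 l Alg K \<omega>)) s a) \<in> borel_measurable seed_space" for s a
    by (rule measurable_compose[OF inp algm])
  show ?case
  proof (cases "k < K")
    case True
    then show ?thesis using Suc.IH[of k] by (simp add: Let_def nth_append)
  next
    case False
    then have k: "k = K" using Suc by simp
    show ?thesis unfolding k run_last
      by (auto intro!: pm traj_meas seed_comp)
  qed
qed

section \<open>The instance family\<close>

definition Pk :: "nat \<Rightarrow> real \<Rightarrow> (nat \<Rightarrow> nat) \<Rightarrow> kernel" where
  "Pk m \<epsilon> \<theta> s a s' = (if s < 2 then (if s' = s then 1 else 0) else
     (if s' = 0 then 1/2 + (if s < m + 2 \<and> a = \<theta> s then \<epsilon> else 0)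
      else if s' = 1 then 1/2 - (if s < m + 2 \<and> a = \<theta> s then \<epsilon> else 0) else 0))"

definition d0k :: "nat \<Rightarrow> nat \<Rightarrow> real" where
  "d0k m s = (if 2 \<le> s \<and> s < m + 2 then 1 / real m else 0)"

definition lk :: loss where "lk s a = (if s = 1 then 1 else 0)"

lemma Pk_distr:
  assumes "2 \<le> S" "0 \<le> \<epsilon>" "\<epsilon> \<le> 1/2"
  shows "is_distr S (Pk m \<epsilon> \<theta> s a)"
proof -
  have "(\<Sum>i<S. Pk m \<epsilon> \<theta> s a i) = (\<Sum>i<2. Pk m \<epsilon> \<theta> s a i)"
    using assms by (intro sum.mono_neutral_right) (auto simp: Pk_def)
  also have "\<dots> = 1" by (simp add: Pk_def numeral_2_eq_2)
  finally show ?thesis using assms unfolding is_distr_def by (auto simp: Pk_def)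
qed

lemma Pk_supp: "2 \<le> s' \<Longrightarrow> Pk m \<epsilon> \<theta> s a s' = 0"
  by (simp add: Pk_def)

lemma Pk_abs: "s < 2 \<Longrightarrow> Pk m \<epsilon> \<theta> s a = (\<lambda>s'. if s' = s then 1 else 0)"
  by (auto simp: Pk_def)

lemma smp_lt2:
  assumes "\<And>i. 2 \<le> i \<Longrightarrow> p i = 0"
  shows "smp p n x < 2"
proof (cases "\<exists>i<n. x < (\<Sum>j\<le>i. p j)")
  case True
  then obtain i where i: "i < n" "x < (\<Sum>j\<le>i. p j)" by blast
  have "x < (\<Sum>j\<le>min i 1. p j)"
  proof (cases "i \<le> 1")
    case False
    have "(\<Sum>j\<le>i. p j) = (\<Sum>j\<le>1. p j)"
      using False assms by (intro sum.mono_neutral_right) auto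
    then show ?thesis using i False by simp
  qed (use i in auto)
  then have "(LEAST i. x < (\<Sum>j\<le>i. p j)) \<le> min i 1" by (rule Least_le)
  then show ?thesis using True by (simp add: smp_def)
next
  case False then show ?thesis unfolding smp_def by auto
qed

fun ast :: "(nat \<Rightarrow> real) \<Rightarrow> nat \<Rightarrow> nat \<Rightarrow> nat \<Rightarrow> nat" where
  "ast u S s1 0 = s1"
| "ast u S s1 (Suc n) = smp (\<lambda>s'. if s' = ast u S s1 n then 1 else 0) S (u (2 * n + 4))"

lemma ast_lt2: "s1 < 2 \<Longrightarrow> ast u S s1 n < 2"
proof (induction n)
  case (Suc n) then show ?case by (simp, intro smp_lt2) auto
qed simp

definition TR :: "nat \<Rightarrow> nat \<Rightarrow> policy \<Rightarrow> (nat \<Rightarrow> real) \<Rightarrow> nat \<Rightarrow> nat \<Rightarrow> nat \<Rightarrow> trajectory" where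
  "TR S A pol u s0 a0 s1 t = (if t = 0 then (s0, a0) else
      (ast u S s1 (t - 1), smp (pol (ast u S s1 (t - 1))) A (u (2 * t + 1))))"

lemma traj_state_dec:
  "traj_state S A (Pk m \<epsilon> \<theta>) d0 pol u (Suc n) = ast u S (traj_state S A (Pk m \<epsilon> \<theta>) d0 pol u 1) n"
proof (induction n)
  case 0 then show ?case by simp
next
  case (Suc n)
  have lt: "traj_state S A (Pk m \<epsilon> \<theta>) d0 pol u 1 < 2"
    by (simp add: Let_def, rule smp_lt2) (simp add: Pk_supp)
  have "ast u S (traj_state S A (Pk m \<epsilon> \<theta>) d0 pol u 1) n < 2" by (rule ast_lt2[OF lt])
  then show ?case using Suc by (simp add: Let_def Pk_abs algebra_simps numeral_eq_Suc)
qed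

lemma traj_dec:
  "traj S A (Pk m \<epsilon> \<theta>) d0 pol u = TR S A pol u (smp d0 S (u 0)) (smp (pol (smp d0 S (u 0))) A (u 1))
      (smp (Pk m \<epsilon> \<theta> (smp d0 S (u 0)) (smp (pol (smp d0 S (u 0))) A (u 1))) S (u 2))"
proof
  fix t
  show "traj S A (Pk m \<epsilon> \<theta>) d0 pol u t = TR S A pol u (smp d0 S (u 0)) (smp (pol (smp d0 S (u 0))) A (u 1))
      (smp (Pk m \<epsilon> \<theta> (smp d0 S (u 0)) (smp (pol (smp d0 S (u 0))) A (u 1))) S (u 2)) t"
  proof (cases t)
    case 0 then show ?thesis by (simp add: traj_def TR_def Let_def)
  next
    case (Suc n)
    then show ?thesis unfolding traj_def TR_def Let_def
      by (simp only: traj_state_dec) (simp add: Let_def numeral_2_eq_2)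
  qed
qed

lemma ast_upd2: "ast (u(2 := x)) S s1 n = ast u S s1 n"
  by (induction n) auto

lemma TR_upd2: "TR S A pol (u(2 := x)) s0 a0 s1 = TR S A pol u s0 a0 s1"
  by (auto simp: TR_def ast_upd2 fun_eq_iff)

definition ratio :: "kernel \<Rightarrow> kernel \<Rightarrow> nat \<Rightarrow> nat \<Rightarrow> nat \<Rightarrow> real" where
  "ratio P Q s0 a0 s1 = (if Q s0 a0 s1 = 0 then 1 else P s0 a0 s1 / Q s0 a0 s1)"

definition wfk :: "kernel \<Rightarrow> kernel \<Rightarrow> trajectory \<Rightarrow> real" where
  "wfk P Q tr = ratio P Q (fst (tr 0)) (snd (tr 0)) (fst (tr 1))"

lemma wfk_meas:
  fixes h :: "nat \<times> nat \<Rightarrow> nat \<times> nat \<Rightarrow> real"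
  assumes pol: "\<And>s a. (\<lambda>\<omega>. pol \<omega> s a) \<in> borel_measurable M"
    and u: "\<And>t. (\<lambda>\<omega>. u \<omega> t) \<in> borel_measurable M"
  shows "(\<lambda>\<omega>. h (traj S A Q d0 (pol \<omega>) (u \<omega>) 0) (traj S A Q d0 (pol \<omega>) (u \<omega>) 1)) \<in> borel_measurable M"
proof -
  have "(\<lambda>\<omega>. (traj S A Q d0 (pol \<omega>) (u \<omega>) 0, traj S A Q d0 (pol \<omega>) (u \<omega>) 1)) \<in> measurable M (count_space UNIV)"
    by (intro count_pair_meas traj_meas pol u)
  from count_to_borel[OF this, of "\<lambda>(x,y). h x y"] show ?thesis by simp
qed

lemma Pk_pos:
  assumes "0 \<le> \<epsilon>" "\<epsilon> < 1/2" "s' < 2"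
  shows "Pk m \<epsilon> \<theta> s a s' = 0 \<longleftrightarrow> (s < 2 \<and> s' \<noteq> s)"
  using assms by (auto simp: Pk_def)

lemma ratio_bnd:
  assumes "0 \<le> \<epsilon>" "\<epsilon> \<le> 1/4"
  shows "0 \<le> ratio (Pk m \<epsilon> \<theta>) (Pk m \<epsilon> \<theta>') s0 a0 s1 \<and> ratio (Pk m \<epsilon> \<theta>) (Pk m \<epsilon> \<theta>') s0 a0 s1 \<le> 3"
proof -
  have q: "1/4 \<le> Pk m \<epsilon> \<theta>' s0 a0 s1 \<or> Pk m \<epsilon> \<theta>' s0 a0 s1 = 0" using assms by (auto simp: Pk_def)
  have p: "0 \<le> Pk m \<epsilon> \<theta> s0 a0 s1 \<and> Pk m \<epsilon> \<theta> s0 a0 s1 \<le> 3/4 \<or> Pk m \<epsilon> \<theta> s0 a0 s1 = 1" using assms by (auto simp: Pk_def)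
  have pq: "Pk m \<epsilon> \<theta> s0 a0 s1 = 1 \<Longrightarrow> Pk m \<epsilon> \<theta>' s0 a0 s1 = 1" using assms by (auto simp: Pk_def split: if_splits)
  show ?thesis
  proof (cases "Pk m \<epsilon> \<theta>' s0 a0 s1 = 0")
    case True then show ?thesis by (simp add: ratio_def)
  next
    case False
    then have q4: "1/4 \<le> Pk m \<epsilon> \<theta>' s0 a0 s1" using q by simp
    show ?thesis
    proof (cases "Pk m \<epsilon> \<theta> s0 a0 s1 = 1")
      case True then show ?thesis using pq by (simp add: ratio_def)
    next
      case f2: False
      then have "0 \<le> Pk m \<epsilon> \<theta> s0 a0 s1" "Pk m \<epsilon> \<theta> s0 a0 s1 \<le> 3/4" using p by auto
      then show ?thesis using q4 False by (auto simp: ratio_def field_simps)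
    qed
  qed
qed

lemma ratio_mult:
  assumes "0 \<le> \<epsilon>" "\<epsilon> < 1/2"
  shows "Pk m \<epsilon> \<theta>' s0 a0 s1 * ratio (Pk m \<epsilon> \<theta>) (Pk m \<epsilon> \<theta>') s0 a0 s1 = Pk m \<epsilon> \<theta> s0 a0 s1"
proof (cases "Pk m \<epsilon> \<theta>' s0 a0 s1 = 0")
  case True
  then have "Pk m \<epsilon> \<theta> s0 a0 s1 = 0" using assms by (auto simp: Pk_def split: if_splits)
  then show ?thesis using True by (simp add: ratio_def)
qed (simp add: ratio_def)

lemma row_upd: "(\<lambda>t. (fun_upd \<omega> (j, 2) x) (j, t)) = fun_upd (\<lambda>t. \<omega> (j, t)) 2 x"
  by (auto simp: fun_eq_iff)

lemma traj_upd2: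
  "traj S A (Pk m \<epsilon> \<theta>) d0 pol (fun_upd u 2 x) = TR S A pol u (smp d0 S (u 0)) (smp (pol (smp d0 S (u 0))) A (u 1))
      (smp (Pk m \<epsilon> \<theta> (smp d0 S (u 0)) (smp (pol (smp d0 S (u 0))) A (u 1))) S x)"
  by (subst traj_dec) (simp add: TR_upd2)

lemma TR_01: "TR S A pol u s0 a0 s1 0 = (s0, a0)" "fst (TR S A pol u s0 a0 s1 1) = s1" "fst (TR S A pol u s0 a0 s1 (Suc 0)) = s1"
  by (auto simp: TR_def)

lemma abs_int_bnd:
  fixes f :: "_ \<Rightarrow> real"
  assumes "prob_space M" "\<And>x. \<bar>f x\<bar> \<le> B"
  shows "\<bar>\<integral>x. f x \<partial>M\<bar> \<le> B"
proof -
  interpret prob_space M by fact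
  obtain x0 where "x0 \<in> space M" using not_empty by blast
  then have B0: "0 \<le> B" using assms(2)[of x0] by linarith
  show ?thesis
  proof (cases "integrable M f")
    case True
    have "\<bar>\<integral>x. f x \<partial>M\<bar> \<le> (\<integral>x. \<bar>f x\<bar> \<partial>M)" by (rule integral_abs_bound)
    also have "\<dots> \<le> (\<integral>x. B \<partial>M)" using True assms by (intro integral_mono) auto
    finally show ?thesis by (simp add: prob_space)
  next
    case False then show ?thesis using B0 by (simp add: not_integrable_integral_eq)
  qed
qed

lemma E1:
  assumes S2: "2 \<le> S" and e: "0 \<le> \<epsilon>" "\<epsilon> \<le> 1/4"
    and FP: "(\<lambda>r. F (traj S A (Pk m \<epsilon> \<theta>) d0 pol (\<lambda>t. r (j, t)))) \<in> borel_measurable seed_space"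
    and FQ: "(\<lambda>r. F (traj S A (Pk m \<epsilon> \<theta>') d0 pol (\<lambda>t. r (j, t)))) \<in> borel_measurable seed_space"
    and B: "\<And>tr. \<bar>F tr\<bar> \<le> B"
  shows "(\<integral>r. F (traj S A (Pk m \<epsilon> \<theta>) d0 pol (\<lambda>t. r (j, t))) \<partial>seed_space) =
         (\<integral>r. F (traj S A (Pk m \<epsilon> \<theta>') d0 pol (\<lambda>t. r (j, t))) *
               wfk (Pk m \<epsilon> \<theta>) (Pk m \<epsilon> \<theta>') (traj S A (Pk m \<epsilon> \<theta>') d0 pol (\<lambda>t. r (j, t))) \<partial>seed_space)"
proof -
  let ?P = "Pk m \<epsilon> \<theta>" and ?Q = "Pk m \<epsilon> \<theta>'"
  have e2: "\<epsilon> < 1/2" "\<epsilon> \<le> 1/2" using e by auto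
  have wm: "(\<lambda>r. wfk ?P ?Q (traj S A ?Q d0 pol (\<lambda>t. r (j, t)))) \<in> borel_measurable seed_space"
    unfolding wfk_def by (rule wfk_meas[where h="\<lambda>x y. ratio ?P ?Q (fst x) (snd x) (fst y)"]) auto
  have wb: "0 \<le> wfk ?P ?Q tr \<and> wfk ?P ?Q tr \<le> 3" for tr
    unfolding wfk_def by (rule ratio_bnd[OF e])
  have lhs: "(\<integral>r. F (traj S A ?P d0 pol (\<lambda>t. r (j, t))) \<partial>seed_space) =
    (\<integral>\<omega>. (\<integral>x. F (traj S A ?P d0 pol (\<lambda>t. (fun_upd \<omega> (j,2) x) (j, t))) \<partial>U) \<partial>seed_space)"
    by (rule int_upd[OF FP B])
  have rhs: "(\<integral>r. F (traj S A ?Q d0 pol (\<lambda>t. r (j, t))) * wfk ?P ?Q (traj S A ?Q d0 pol (\<lambda>t. r (j, t))) \<partial>seed_space) =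
    (\<integral>\<omega>. (\<integral>x. F (traj S A ?Q d0 pol (\<lambda>t. (fun_upd \<omega> (j,2) x) (j, t))) *
       wfk ?P ?Q (traj S A ?Q d0 pol (\<lambda>t. (fun_upd \<omega> (j,2) x) (j, t))) \<partial>U) \<partial>seed_space)"
  proof (rule int_upd[where B="B * 3"])
    show "(\<lambda>r. F (traj S A ?Q d0 pol (\<lambda>t. r (j, t))) * wfk ?P ?Q (traj S A ?Q d0 pol (\<lambda>t. r (j, t)))) \<in> borel_measurable seed_space"
      using FQ wm by measurable
    fix r
    have "\<bar>F (traj S A ?Q d0 pol (\<lambda>t. r (j, t)))\<bar> * \<bar>wfk ?P ?Q (traj S A ?Q d0 pol (\<lambda>t. r (j, t)))\<bar> \<le> B * 3"
      using B wb by (intro mult_mono) (auto intro: order_trans[OF abs_ge_zero B])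
    then show "\<bar>F (traj S A ?Q d0 pol (\<lambda>t. r (j, t))) * wfk ?P ?Q (traj S A ?Q d0 pol (\<lambda>t. r (j, t)))\<bar> \<le> B * 3"
      by (simp add: abs_mult)
  qed
  show ?thesis
    unfolding lhs rhs
  proof (rule Bochner_Integration.integral_cong[OF refl])
    fix \<omega> :: "nat \<times> nat \<Rightarrow> real"
    let ?u = "\<lambda>t. \<omega> (j, t)"
    let ?s0 = "smp d0 S (?u 0)"
    let ?a0 = "smp (pol ?s0) A (?u 1)"
    let ?T = "TR S A pol ?u ?s0 ?a0"
    have "(\<integral>x. F (traj S A ?P d0 pol (\<lambda>t. (fun_upd \<omega> (j,2) x) (j, t))) \<partial>U) = (\<integral>x. F (?T (smp (?P ?s0 ?a0) S x)) \<partial>U)"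
      by (simp only: row_upd traj_upd2)
    also have "\<dots> = (\<Sum>i<S. ?P ?s0 ?a0 i * F (?T i))"
      by (rule int_smp[OF Pk_distr[OF S2 e(1) e2(2)]])
    also have "\<dots> = (\<Sum>i<S. ?Q ?s0 ?a0 i * (F (?T i) * wfk ?P ?Q (?T i)))"
      by (intro sum.cong refl) (simp add: wfk_def TR_01 ratio_mult[OF e(1) e2(1), symmetric])
    also have "\<dots> = (\<integral>x. F (?T (smp (?Q ?s0 ?a0) S x)) * wfk ?P ?Q (?T (smp (?Q ?s0 ?a0) S x)) \<partial>U)"
      by (rule int_smp[OF Pk_distr[OF S2 e(1) e2(2)], symmetric])
    also have "\<dots> = (\<integral>x. F (traj S A ?Q d0 pol (\<lambda>t. (fun_upd \<omega> (j,2) x) (j, t))) *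
       wfk ?P ?Q (traj S A ?Q d0 pol (\<lambda>t. (fun_upd \<omega> (j,2) x) (j, t))) \<partial>U)"
      by (simp only: row_upd traj_upd2)
    finally show "(\<integral>x. F (traj S A ?P d0 pol (\<lambda>t. (fun_upd \<omega> (j,2) x) (j, t))) \<partial>U) =
      (\<integral>x. F (traj S A ?Q d0 pol (\<lambda>t. (fun_upd \<omega> (j,2) x) (j, t))) *
       wfk ?P ?Q (traj S A ?Q d0 pol (\<lambda>t. (fun_upd \<omega> (j,2) x) (j, t))) \<partial>U)" .
  qed
qed

section \<open>Change of measure over many episodes\<close>

lemma input_meas2:
  assumes z: "z \<in> borel_measurable seed_space"
    and h: "\<And>j t. j < K \<Longrightarrow> (\<lambda>\<omega>. snd (h \<omega> ! j) t) \<in> measurable seed_space (count_space UNIV)"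
    and len: "\<And>\<omega>. length (h \<omega>) = K"
  shows "(\<lambda>\<omega>. (z \<omega>, Hh (h \<omega>), Lh l (h \<omega>))) \<in> measurable seed_space alg_input_space"
  unfolding alg_input_space_def
proof (intro measurable_Pair)
  show "z \<in> borel_measurable seed_space" by (rule z)
  show "(\<lambda>\<omega>. Lh l (h \<omega>)) \<in> measurable seed_space (PiM UNIV (\<lambda>_. PiM UNIV (\<lambda>_. PiM UNIV (\<lambda>_. borel))))"
    unfolding Lh_def len by (rule measurable_const) (auto simp: space_PiM)
  show "(\<lambda>\<omega>. Hh (h \<omega>)) \<in> measurable seed_space (PiM UNIV (\<lambda>_. PiM UNIV (\<lambda>_. count_space UNIV)))"
    unfolding Hh_def len
    apply (rule measurable_PiM_single')
     apply (rule measurable_PiM_single')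
    subgoal for j t by (cases "j < K") (auto intro: h)
    by (auto simp: space_PiM)
qed

definition depK :: "nat \<Rightarrow> ((nat \<times> nat \<Rightarrow> real) \<Rightarrow> 'b) \<Rightarrow> bool" where
  "depK K f \<longleftrightarrow> (\<forall>\<omega> \<omega>'. \<omega> (0,0) = \<omega>' (0,0) \<longrightarrow> (\<forall>j t. 1 \<le> j \<longrightarrow> j \<le> K \<longrightarrow> \<omega> (j,t) = \<omega>' (j,t)) \<longrightarrow> f \<omega> = f \<omega>')"

definition good_fam :: "nat \<Rightarrow> ((nat \<times> nat \<Rightarrow> real) \<Rightarrow> real) \<Rightarrow> ((nat \<times> nat \<Rightarrow> real) \<Rightarrow> (policy \<times> trajectory) list) \<Rightarrow> bool" where
  "good_fam K z h \<longleftrightarrow> z \<in> borel_measurable seed_space \<and> (\<forall>\<omega>. length (h \<omega>) = K) \<and>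
     (\<forall>k<K. \<forall>s a. (\<lambda>\<omega>. fst (h \<omega> ! k) s a) \<in> borel_measurable seed_space) \<and>
     (\<forall>k<K. \<forall>t. (\<lambda>\<omega>. snd (h \<omega> ! k) t) \<in> measurable seed_space (count_space UNIV)) \<and> depK K z \<and> depK K h"

definition goodG :: "nat \<Rightarrow> (real \<Rightarrow> (policy \<times> trajectory) list \<Rightarrow> real) \<Rightarrow> bool" where
  "goodG K G \<longleftrightarrow> (\<forall>z h. good_fam K z h \<longrightarrow> (\<lambda>\<omega>. G (z \<omega>) (h \<omega>)) \<in> borel_measurable seed_space)"

definition Wt :: "kernel \<Rightarrow> kernel \<Rightarrow> (policy \<times> trajectory) list \<Rightarrow> real" where
  "Wt P Q h = prod_list (map (\<lambda>x. wfk P Q (snd x)) h)"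

lemma Wt_snoc: "Wt P Q (h @ [x]) = Wt P Q h * wfk P Q (snd x)"
  by (simp add: Wt_def)

lemma Wt_bnd:
  assumes "0 \<le> \<epsilon>" "\<epsilon> \<le> 1/4"
  shows "0 \<le> Wt (Pk m \<epsilon> \<theta>) (Pk m \<epsilon> \<theta>') h \<and> Wt (Pk m \<epsilon> \<theta>) (Pk m \<epsilon> \<theta>') h \<le> 3 ^ length h"
proof (induction h rule: rev_induct)
  case Nil then show ?case by (simp add: Wt_def)
next
  case (snoc x h)
  have "0 \<le> wfk (Pk m \<epsilon> \<theta>) (Pk m \<epsilon> \<theta>') (snd x) \<and> wfk (Pk m \<epsilon> \<theta>) (Pk m \<epsilon> \<theta>') (snd x) \<le> 3"
    unfolding wfk_def by (rule ratio_bnd[OF assms])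
  then show ?case using snoc mult_mono[of "Wt (Pk m \<epsilon> \<theta>) (Pk m \<epsilon> \<theta>') h" "3 ^ length h" "wfk (Pk m \<epsilon> \<theta>) (Pk m \<epsilon> \<theta>') (snd x)" 3]
    by (auto simp: Wt_snoc mult.commute)
qed

lemma pure_good:
  assumes va: "valid_alg S A Alg"
  shows "good_fam K (\<lambda>\<omega>. \<omega> (0,0)) (run S A P d0 l Alg K)"
proof -
  have d1: "depK K (run S A P d0 l Alg K)"
    unfolding depK_def by (intro allI impI run_dep) auto
  have d2: "depK K (\<lambda>\<omega>. \<omega> (0,0))"
    unfolding depK_def by simp
  show ?thesis
    unfolding good_fam_def using run_meas[OF va] d1 d2 seed_comp by simp
qed

lemma const_good: "length h0 = K \<Longrightarrow> good_fam K (\<lambda>_. z0) (\<lambda>_. h0)"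
  unfolding good_fam_def depK_def by auto

definition pik :: "algorithm \<Rightarrow> loss \<Rightarrow> nat \<Rightarrow> real \<Rightarrow> (policy \<times> trajectory) list \<Rightarrow> policy" where
  "pik Alg l K z h = Alg K (z, Hh h, Lh l h)"

definition ext :: "nat \<Rightarrow> nat \<Rightarrow> kernel \<Rightarrow> (nat \<Rightarrow> real) \<Rightarrow> loss \<Rightarrow> algorithm \<Rightarrow> nat \<Rightarrow>
    ((nat \<times> nat \<Rightarrow> real) \<Rightarrow> real) \<Rightarrow> ((nat \<times> nat \<Rightarrow> real) \<Rightarrow> (policy \<times> trajectory) list) \<Rightarrow>
    (nat \<times> nat \<Rightarrow> real) \<Rightarrow> (policy \<times> trajectory) list" where
  "ext S A P d0 l Alg K z h \<omega> = h \<omega> @ [(pik Alg l K (z \<omega>) (h \<omega>),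
      traj S A P d0 (pik Alg l K (z \<omega>) (h \<omega>)) (\<lambda>t. \<omega> (Suc K, t)))]"

lemma ext_good:
  assumes va: "valid_alg S A Alg" and g: "good_fam K z h"
  shows "good_fam (Suc K) z (ext S A P d0 l Alg K z h)"
proof -
  have z: "z \<in> borel_measurable seed_space" and len: "\<And>\<omega>. length (h \<omega>) = K"
    and hp: "\<And>k s a. k < K \<Longrightarrow> (\<lambda>\<omega>. fst (h \<omega> ! k) s a) \<in> borel_measurable seed_space"
    and ht: "\<And>k t. k < K \<Longrightarrow> (\<lambda>\<omega>. snd (h \<omega> ! k) t) \<in> measurable seed_space (count_space UNIV)"
    and dz: "depK K z" and dh: "depK K h"
    using g unfolding good_fam_def by auto
  have algm: "(\<lambda>x. Alg K x s a) \<in> borel_measurable alg_input_space" for s a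
    using va by (simp add: valid_alg_def)
  have inp: "(\<lambda>\<omega>. (z \<omega>, Hh (h \<omega>), Lh l (h \<omega>))) \<in> measurable seed_space alg_input_space"
    by (rule input_meas2[OF z ht len]) 
  have pm: "(\<lambda>\<omega>. pik Alg l K (z \<omega>) (h \<omega>) s a) \<in> borel_measurable seed_space" for s a
    unfolding pik_def by (rule measurable_compose[OF inp algm])
  have dmono: "depK (Suc K) f" if "depK K f" for f :: "_ \<Rightarrow> 'x"
    unfolding depK_def
  proof (intro allI impI)
    fix \<omega> \<omega>' :: "nat \<times> nat \<Rightarrow> real"
    assume a: "\<omega> (0,0) = \<omega>' (0,0)" and b: "\<forall>j t. 1 \<le> j \<longrightarrow> j \<le> Suc K \<longrightarrow> \<omega> (j,t) = \<omega>' (j,t)"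
    have "\<forall>j t. 1 \<le> j \<longrightarrow> j \<le> K \<longrightarrow> \<omega> (j,t) = \<omega>' (j,t)" using b by simp
    then show "f \<omega> = f \<omega>'" using that a unfolding depK_def by blast
  qed
  have dz1: "depK (Suc K) z" by (rule dmono[OF dz])
  have dh1: "depK (Suc K) h" by (rule dmono[OF dh])
  have dext: "depK (Suc K) (ext S A P d0 l Alg K z h)"
    unfolding depK_def
  proof (intro allI impI)
    fix \<omega> \<omega>' :: "nat \<times> nat \<Rightarrow> real"
    assume a: "\<omega> (0,0) = \<omega>' (0,0)" "\<forall>j t. 1 \<le> j \<longrightarrow> j \<le> Suc K \<longrightarrow> \<omega> (j,t) = \<omega>' (j,t)"
    have "z \<omega> = z \<omega>'" using dz1 a unfolding depK_def by blast
    moreover have "h \<omega> = h \<omega>'" using dh1 a unfolding depK_def by blast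
    moreover have "(\<lambda>t. \<omega> (Suc K, t)) = (\<lambda>t. \<omega>' (Suc K, t))" using a by auto
    ultimately show "ext S A P d0 l Alg K z h \<omega> = ext S A P d0 l Alg K z h \<omega>'"
      by (simp add: ext_def)
  qed
  show ?thesis
    unfolding good_fam_def
  proof (intro conjI allI impI z dz1 dext)
    show "\<And>\<omega>. length (ext S A P d0 l Alg K z h \<omega>) = Suc K" by (simp add: ext_def len)
    fix k assume k: "k < Suc K"
    show "(\<lambda>\<omega>. fst (ext S A P d0 l Alg K z h \<omega> ! k) s a) \<in> borel_measurable seed_space" for s a
    proof (cases "k < K")
      case True then show ?thesis using hp[OF True] by (simp add: ext_def nth_append len)
    next
      case False then have "k = K" using k by simp
      then show ?thesis using pm by (simp add: ext_def nth_append len)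
    qed
    show "(\<lambda>\<omega>. snd (ext S A P d0 l Alg K z h \<omega> ! k) t) \<in> measurable seed_space (count_space UNIV)" for t
    proof (cases "k < K")
      case True then show ?thesis using ht[OF True] by (simp add: ext_def nth_append len)
    next
      case False then have "k = K" using k by simp
      then show ?thesis by (simp add: ext_def nth_append len) (intro traj_meas pm seed_comp)
    qed
  qed
qed

lemma run_ext: "run S A P d0 l Alg (Suc K) = ext S A P d0 l Alg K (\<lambda>\<omega>. \<omega> (0,0)) (run S A P d0 l Alg K)"
  by (rule ext) (simp only: ext_def pik_def run_Suc')

lemma ext_mrg:
  assumes "depK K z" "depK K h"
  shows "ext S A P d0 l Alg K z h (mrg (rowset (Suc K)) \<omega> r) =
    h \<omega> @ [(pik Alg l K (z \<omega>) (h \<omega>), traj S A P d0 (pik Alg l K (z \<omega>) (h \<omega>)) (\<lambda>t. r (Suc K, t)))]"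
proof -
  have e1: "mrg (rowset (Suc K)) \<omega> r (0,0) = \<omega> (0,0)" by (simp add: mrg_def rowset_def)
  have e2: "\<forall>j t. 1 \<le> j \<longrightarrow> j \<le> K \<longrightarrow> mrg (rowset (Suc K)) \<omega> r (j,t) = \<omega> (j,t)"
    by (simp add: mrg_def rowset_def)
  have "z (mrg (rowset (Suc K)) \<omega> r) = z \<omega>" "h (mrg (rowset (Suc K)) \<omega> r) = h \<omega>"
    using assms e1 e2 unfolding depK_def by blast+
  then show ?thesis by (simp add: ext_def mrg_row)
qed

lemma Wt_prod: "Wt P Q h = (\<Prod>k<length h. wfk P Q (snd (h ! k)))"
proof (induction h rule: rev_induct)
  case Nil then show ?case by (simp add: Wt_def)
next
  case (snoc x h)
  have c: "(\<Prod>k<length h. wfk P Q (snd ((h @ [x]) ! k))) = (\<Prod>k<length h. wfk P Q (snd (h ! k)))"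
    by (intro prod.cong) (auto simp: nth_append)
  have "(\<Prod>k<length (h @ [x]). wfk P Q (snd ((h @ [x]) ! k))) = (\<Prod>k<length h. wfk P Q (snd (h ! k))) * wfk P Q (snd x)"
    using c by simp
  moreover have "Wt P Q (h @ [x]) = (\<Prod>k<length h. wfk P Q (snd (h ! k))) * wfk P Q (snd x)"
    using snoc.IH by (simp add: Wt_snoc)
  ultimately show ?case by linarith
qed

lemma Wt_meas:
  assumes "good_fam K z h"
  shows "(\<lambda>\<omega>. Wt P Q (h \<omega>)) \<in> borel_measurable seed_space"
proof -
  have len: "\<And>\<omega>. length (h \<omega>) = K" and ht: "\<And>k t. k < K \<Longrightarrow> (\<lambda>\<omega>. snd (h \<omega> ! k) t) \<in> measurable seed_space (count_space UNIV)"
    using assms unfolding good_fam_def by auto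
  have w: "(\<lambda>\<omega>. wfk P Q (snd (h \<omega> ! k))) \<in> borel_measurable seed_space" if k: "k < K" for k
  proof -
    have "(\<lambda>\<omega>. (snd (h \<omega> ! k) 0, snd (h \<omega> ! k) 1)) \<in> measurable seed_space (count_space UNIV)"
      by (intro count_pair_meas ht k)
    from count_to_borel[OF this, of "\<lambda>(x,y). ratio P Q (fst x) (snd x) (fst y)"] show ?thesis
      by (simp add: wfk_def)
  qed
  show ?thesis unfolding Wt_prod len
    by (rule borel_measurable_prod) (auto intro: w)
qed

lemma pik_meas:
  assumes va: "valid_alg S A Alg" and g: "good_fam K z h"
  shows "(\<lambda>\<omega>. pik Alg l K (z \<omega>) (h \<omega>) s a) \<in> borel_measurable seed_space"
proof -
  have "good_fam (Suc K) z (ext S A P d0 l Alg K z h)" by (rule ext_good[OF va g])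
  then have "(\<lambda>\<omega>. fst (ext S A P d0 l Alg K z h \<omega> ! K) s a) \<in> borel_measurable seed_space"
    unfolding good_fam_def by auto
  moreover have "length (h \<omega>) = K" for \<omega> using g unfolding good_fam_def by auto
  ultimately show ?thesis by (simp add: ext_def nth_append)
qed

lemma CM:
  assumes va: "valid_alg S A Alg" and S2: "2 \<le> S" and e: "0 \<le> \<epsilon>" "\<epsilon> \<le> 1/4"
  shows "\<forall>G B. (\<forall>z h. \<bar>G z h\<bar> \<le> B) \<longrightarrow> goodG K G \<longrightarrow>
    (\<integral>\<omega>. G (\<omega> (0,0)) (run S A (Pk m \<epsilon> \<theta>) d0 l Alg K \<omega>) \<partial>seed_space) =
    (\<integral>\<omega>. G (\<omega> (0,0)) (run S A (Pk m \<epsilon> \<theta>') d0 l Alg K \<omega>) *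
          Wt (Pk m \<epsilon> \<theta>) (Pk m \<epsilon> \<theta>') (run S A (Pk m \<epsilon> \<theta>') d0 l Alg K \<omega>) \<partial>seed_space)"
proof (induction K)
  case 0 then show ?case by (simp add: Wt_def)
next
  case (Suc K)
  let ?P = "Pk m \<epsilon> \<theta>" and ?Q = "Pk m \<epsilon> \<theta>'"
  show ?case
  proof (intro allI impI)
    fix G :: "real \<Rightarrow> (policy \<times> trajectory) list \<Rightarrow> real" and B :: real
    assume Gb: "\<forall>z h. \<bar>G z h\<bar> \<le> B" and Gg: "goodG (Suc K) G"
    have B0: "0 \<le> B" using Gb by (meson abs_ge_zero order_trans)
    define G2 where "G2 z h = (\<integral>r. G z (h @ [(pik Alg l K z h, traj S A ?Q d0 (pik Alg l K z h) (\<lambda>t. r (Suc K, t)))]) *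
         wfk ?P ?Q (traj S A ?Q d0 (pik Alg l K z h) (\<lambda>t. r (Suc K, t))) \<partial>seed_space)" for z h
    have wb: "0 \<le> wfk ?P ?Q tr \<and> wfk ?P ?Q tr \<le> 3" for tr
      unfolding wfk_def by (rule ratio_bnd[OF e])
    have G2b: "\<bar>G2 z h\<bar> \<le> B * 3" for z h
      unfolding G2_def
    proof (rule abs_int_bnd[OF prob_seed])
      fix r
      show "\<bar>G z (h @ [(pik Alg l K z h, traj S A ?Q d0 (pik Alg l K z h) (\<lambda>t. r (Suc K, t)))]) *
         wfk ?P ?Q (traj S A ?Q d0 (pik Alg l K z h) (\<lambda>t. r (Suc K, t)))\<bar> \<le> B * 3"
        unfolding abs_mult using Gb wb by (intro mult_mono) (auto simp: B0)
    qed
    have mrg_dep: "f (mrg (rowset (Suc K)) \<omega> r) = f \<omega>" if "depK K f" for f :: "_ \<Rightarrow> 'x" and \<omega> r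
    proof -
      have e1: "mrg (rowset (Suc K)) \<omega> r (0,0) = \<omega> (0,0)" by (simp add: mrg_def rowset_def)
      have e2: "\<forall>j t. 1 \<le> j \<longrightarrow> j \<le> K \<longrightarrow> mrg (rowset (Suc K)) \<omega> r (j,t) = \<omega> (j,t)"
        by (simp add: mrg_def rowset_def)
      show ?thesis using that e1 e2 unfolding depK_def by blast
    qed
    have G2g: "goodG K G2"
      unfolding goodG_def
    proof (intro allI impI)
      fix z h assume g: "good_fam K z h"
      have dz: "depK K z" and dh: "depK K h" using g unfolding good_fam_def by auto
      define \<Phi> where "\<Phi> \<omega>' = G (z \<omega>') (ext S A ?Q d0 l Alg K z h \<omega>') *
          wfk ?P ?Q (traj S A ?Q d0 (pik Alg l K (z \<omega>') (h \<omega>')) (\<lambda>t. \<omega>' (Suc K, t)))" for \<omega>'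
      have \<Phi>m: "\<Phi> \<in> borel_measurable seed_space"
      proof -
        have "(\<lambda>\<omega>. G (z \<omega>) (ext S A ?Q d0 l Alg K z h \<omega>)) \<in> borel_measurable seed_space"
          using Gg ext_good[OF va g] unfolding goodG_def by blast
        moreover have "(\<lambda>\<omega>'. wfk ?P ?Q (traj S A ?Q d0 (pik Alg l K (z \<omega>') (h \<omega>')) (\<lambda>t. \<omega>' (Suc K, t)))) \<in> borel_measurable seed_space"
          unfolding wfk_def
          by (rule wfk_meas[where h="\<lambda>x y. ratio ?P ?Q (fst x) (snd x) (fst y)"]) (auto intro: pik_meas[OF va g] seed_comp)
        ultimately show ?thesis unfolding \<Phi>_def by measurable
      qed
      have eq: "G2 (z \<omega>) (h \<omega>) = (\<integral>r. \<Phi> (mrg (rowset (Suc K)) \<omega> r) \<partial>seed_space)" for \<omega>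
        unfolding G2_def \<Phi>_def ext_mrg[OF dz dh] mrg_dep[OF dz] mrg_dep[OF dh] mrg_row ..
      have "(\<lambda>\<omega>. \<integral>r. \<Phi> (mrg (rowset (Suc K)) \<omega> r) \<partial>seed_space) \<in> borel_measurable seed_space"
      proof -
        interpret S: prob_space seed_space by (rule prob_seed)
        have "(\<lambda>x. \<Phi> (case x of (\<omega>, r) \<Rightarrow> mrg (rowset (Suc K)) \<omega> r)) \<in> borel_measurable (seed_space \<Otimes>\<^sub>M seed_space)"
          by (rule measurable_compose[OF mrg_measurable \<Phi>m])
        then have "case_prod (\<lambda>\<omega> r. \<Phi> (mrg (rowset (Suc K)) \<omega> r)) \<in> borel_measurable (seed_space \<Otimes>\<^sub>M seed_space)"
          by (simp add: case_prod_unfold)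
        then show ?thesis
          by (rule S.borel_measurable_lebesgue_integral)
      qed
      then show "(\<lambda>\<omega>. G2 (z \<omega>) (h \<omega>)) \<in> borel_measurable seed_space" unfolding eq .
    qed
    have pg: "good_fam K (\<lambda>\<omega>. \<omega> (0,0)) (run S A X d0 l Alg K)" for X by (rule pure_good[OF va])
    have dzr: "depK K (\<lambda>\<omega>::nat\<times>nat\<Rightarrow>real. \<omega> (0,0))" and dhr: "depK K (run S A X d0 l Alg K)" for X
      using pg[of X] unfolding good_fam_def by auto
    have step1: "(\<integral>\<omega>. G (\<omega> (0,0)) (run S A ?P d0 l Alg (Suc K) \<omega>) \<partial>seed_space) =
        (\<integral>\<omega>. G2 (\<omega> (0,0)) (run S A ?P d0 l Alg K \<omega>) \<partial>seed_space)"
    proof -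
      have fm: "(\<lambda>\<omega>. G (\<omega> (0,0)) (run S A ?P d0 l Alg (Suc K) \<omega>)) \<in> borel_measurable seed_space"
        using Gg pg[of ?P] unfolding goodG_def run_ext by (blast intro: ext_good[OF va])
      have "(\<integral>\<omega>. G (\<omega> (0,0)) (run S A ?P d0 l Alg (Suc K) \<omega>) \<partial>seed_space) =
         (\<integral>\<omega>. (\<integral>r. G (mrg (rowset (Suc K)) \<omega> r (0,0)) (run S A ?P d0 l Alg (Suc K) (mrg (rowset (Suc K)) \<omega> r)) \<partial>seed_space) \<partial>seed_space)"
        by (rule int_mrg[OF fm]) (use Gb in auto)
      also have "\<dots> = (\<integral>\<omega>. G2 (\<omega> (0,0)) (run S A ?P d0 l Alg K \<omega>) \<partial>seed_space)"
      proof (rule Bochner_Integration.integral_cong[OF refl])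
        fix \<omega> :: "nat \<times> nat \<Rightarrow> real"
        let ?z = "\<omega> (0,0)" and ?h = "run S A ?P d0 l Alg K \<omega>"
        let ?pi = "pik Alg l K ?z ?h"
        define F where "F tr = G ?z (?h @ [(?pi, tr)])" for tr
        have FX: "(\<lambda>r. F (traj S A X d0 ?pi (\<lambda>t. r (Suc K, t)))) \<in> borel_measurable seed_space" for X
        proof -
          have "good_fam (Suc K) (\<lambda>_. ?z) (ext S A X d0 l Alg K (\<lambda>_. ?z) (\<lambda>_. ?h))"
            by (rule ext_good[OF va const_good]) simp
          then show ?thesis using Gg unfolding goodG_def F_def ext_def by blast
        qed
        have "(\<integral>r. G (mrg (rowset (Suc K)) \<omega> r (0,0)) (run S A ?P d0 l Alg (Suc K) (mrg (rowset (Suc K)) \<omega> r)) \<partial>seed_space)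
            = (\<integral>r. F (traj S A ?P d0 ?pi (\<lambda>t. r (Suc K, t))) \<partial>seed_space)"
          unfolding run_ext ext_mrg[OF dzr dhr] mrg_00 F_def ..
        also have "\<dots> = (\<integral>r. F (traj S A ?Q d0 ?pi (\<lambda>t. r (Suc K, t))) * wfk ?P ?Q (traj S A ?Q d0 ?pi (\<lambda>t. r (Suc K, t))) \<partial>seed_space)"
          by (rule E1[OF S2 e FX FX]) (use Gb F_def in auto)
        also have "\<dots> = G2 ?z ?h" unfolding G2_def F_def ..
        finally show "(\<integral>r. G (mrg (rowset (Suc K)) \<omega> r (0,0)) (run S A ?P d0 l Alg (Suc K) (mrg (rowset (Suc K)) \<omega> r)) \<partial>seed_space) = G2 ?z ?h" .
      qed
      finally show ?thesis .
    qed
    have step2: "(\<integral>\<omega>. G2 (\<omega> (0,0)) (run S A ?P d0 l Alg K \<omega>) \<partial>seed_space) =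
        (\<integral>\<omega>. G2 (\<omega> (0,0)) (run S A ?Q d0 l Alg K \<omega>) * Wt ?P ?Q (run S A ?Q d0 l Alg K \<omega>) \<partial>seed_space)"
      using Suc.IH G2b G2g by blast
    have step3: "(\<integral>\<omega>. G2 (\<omega> (0,0)) (run S A ?Q d0 l Alg K \<omega>) * Wt ?P ?Q (run S A ?Q d0 l Alg K \<omega>) \<partial>seed_space) =
       (\<integral>\<omega>. G (\<omega> (0,0)) (run S A ?Q d0 l Alg (Suc K) \<omega>) * Wt ?P ?Q (run S A ?Q d0 l Alg (Suc K) \<omega>) \<partial>seed_space)"
    proof -
      have pg1: "good_fam (Suc K) (\<lambda>\<omega>. \<omega> (0,0)) (run S A ?Q d0 l Alg (Suc K))" by (rule pure_good[OF va])
      have fm: "(\<lambda>\<omega>. G (\<omega> (0,0)) (run S A ?Q d0 l Alg (Suc K) \<omega>) * Wt ?P ?Q (run S A ?Q d0 l Alg (Suc K) \<omega>)) \<in> borel_measurable seed_space"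
      proof (rule borel_measurable_times)
        show "(\<lambda>\<omega>. G (\<omega> (0,0)) (run S A ?Q d0 l Alg (Suc K) \<omega>)) \<in> borel_measurable seed_space"
          using Gg pg1 unfolding goodG_def by blast
      qed (rule Wt_meas[OF pg1])
      have fb: "\<bar>G (\<omega> (0,0)) (run S A ?Q d0 l Alg (Suc K) \<omega>) * Wt ?P ?Q (run S A ?Q d0 l Alg (Suc K) \<omega>)\<bar> \<le> B * 3 ^ Suc K" for \<omega>
      proof -
        have w: "0 \<le> Wt ?P ?Q (run S A ?Q d0 l Alg (Suc K) \<omega>) \<and> Wt ?P ?Q (run S A ?Q d0 l Alg (Suc K) \<omega>) \<le> 3 ^ Suc K"
          using Wt_bnd[OF e, of m \<theta> \<theta>' "run S A ?Q d0 l Alg (Suc K) \<omega>"] by (simp only: length_run)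
        have g: "\<bar>G (\<omega> (0,0)) (run S A ?Q d0 l Alg (Suc K) \<omega>)\<bar> \<le> B" using Gb by blast
        show ?thesis unfolding abs_mult using w g
          by (intro mult_mono) (auto simp del: run.simps simp: B0)
      qed
      have "(\<integral>\<omega>. G (\<omega> (0,0)) (run S A ?Q d0 l Alg (Suc K) \<omega>) * Wt ?P ?Q (run S A ?Q d0 l Alg (Suc K) \<omega>) \<partial>seed_space) =
        (\<integral>\<omega>. (\<integral>r. G (mrg (rowset (Suc K)) \<omega> r (0,0)) (run S A ?Q d0 l Alg (Suc K) (mrg (rowset (Suc K)) \<omega> r)) *
           Wt ?P ?Q (run S A ?Q d0 l Alg (Suc K) (mrg (rowset (Suc K)) \<omega> r)) \<partial>seed_space) \<partial>seed_space)"
        by (rule int_mrg[OF fm fb])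
      also have "\<dots> = (\<integral>\<omega>. G2 (\<omega> (0,0)) (run S A ?Q d0 l Alg K \<omega>) * Wt ?P ?Q (run S A ?Q d0 l Alg K \<omega>) \<partial>seed_space)"
      proof (rule Bochner_Integration.integral_cong[OF refl])
        fix \<omega> :: "nat \<times> nat \<Rightarrow> real"
        show "(\<integral>r. G (mrg (rowset (Suc K)) \<omega> r (0,0)) (run S A ?Q d0 l Alg (Suc K) (mrg (rowset (Suc K)) \<omega> r)) *
           Wt ?P ?Q (run S A ?Q d0 l Alg (Suc K) (mrg (rowset (Suc K)) \<omega> r)) \<partial>seed_space) =
           G2 (\<omega> (0,0)) (run S A ?Q d0 l Alg K \<omega>) * Wt ?P ?Q (run S A ?Q d0 l Alg K \<omega>)"
          unfolding run_ext ext_mrg[OF dzr dhr] mrg_00 G2_def Wt_snoc snd_conv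
          by (simp add: mult_ac)
      qed
      finally show ?thesis by simp
    qed
    show "(\<integral>\<omega>. G (\<omega> (0,0)) (run S A ?P d0 l Alg (Suc K) \<omega>) \<partial>seed_space) =
        (\<integral>\<omega>. G (\<omega> (0,0)) (run S A ?Q d0 l Alg (Suc K) \<omega>) * Wt ?P ?Q (run S A ?Q d0 l Alg (Suc K) \<omega>) \<partial>seed_space)"
      using step1 step2 step3 by simp
  qed
qed




lemma hfun_sign:
  fixes x :: real
  assumes x: "0 < x"
  shows "(x \<le> 1 \<longrightarrow> (x+1) * ln x - 2*(x-1) \<le> 0) \<and> (1 \<le> x \<longrightarrow> 0 \<le> (x+1) * ln x - 2*(x-1))"
proof -
  let ?h = "\<lambda>y::real. (y+1) * ln y - 2*(y-1)"
  have d: "DERIV ?h y :> (ln y + (y+1)/y - 2)" if "0 < y" for y :: real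
    using that by (auto intro!: derivative_eq_intros simp: field_simps)
  have dn: "0 \<le> ln y + (y+1)/y - 2" if "0 < y" for y :: real
  proof -
    have "ln (1/y) \<le> 1/y - 1" using ln_le_minus_one[of "1/y"] that by simp
    then have "- ln y \<le> 1/y - 1" using that by (simp add: ln_div)
    moreover have "(y+1)/y = 1 + 1/y" using that by (simp add: field_simps)
    ultimately show ?thesis by simp
  qed
  have h1: "?h 1 = 0" by simp
  show ?thesis
  proof (intro conjI impI)
    assume "x \<le> 1"
    have "?h x \<le> ?h 1"
    proof (rule DERIV_nonneg_imp_nondecreasing[OF \<open>x \<le> 1\<close>])
      fix y assume "x \<le> y" "y \<le> 1"
      then have y: "0 < y" using x by linarith
      show "\<exists>D. DERIV ?h y :> D \<and> 0 \<le> D" using d[OF y] dn[OF y] by blast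
    qed
    then show "?h x \<le> 0" by simp
  next
    assume "1 \<le> x"
    have "?h 1 \<le> ?h x"
    proof (rule DERIV_nonneg_imp_nondecreasing[OF \<open>1 \<le> x\<close>])
      fix y assume "1 \<le> y" "y \<le> x"
      then have y: "0 < y" by linarith
      show "\<exists>D. DERIV ?h y :> D \<and> 0 \<le> D" using d[OF y] dn[OF y] by blast
    qed
    then show "0 \<le> ?h x" by simp
  qed
qed

lemma pinsker_pt:
  fixes x :: real
  assumes x: "0 < x"
  shows "3 * (x - 1)^2 \<le> (2*x + 4) * (x * ln x - x + 1)"
proof -
  let ?g = "\<lambda>y::real. (2*y + 4) * (y * ln y - y + 1) - 3 * (y - 1)^2"
  have d: "DERIV ?g y :> 4 * ((y+1) * ln y - 2*(y-1))" if "0 < y" for y :: real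
  proof -
    have e1: "DERIV ?g y :> (2 * (y * ln y - y + 1) + (2*y + 4) * (ln y + y * (1/y) - 1) - 3 * (2 * (y - 1)))"
      using that by (auto intro!: derivative_eq_intros)
    have e2: "(2 * (y * ln y - y + 1) + (2*y + 4) * (ln y + y * (1/y) - 1) - 3 * (2 * (y - 1))) = 4 * ((y+1) * ln y - 2*(y-1))"
      using that by (simp add: field_simps)
    show ?thesis by (rule DERIV_cong[OF e1 e2])
  qed
  have "0 \<le> ?g x"
  proof (cases "x \<le> 1")
    case True
    have "?g 1 \<le> ?g x"
    proof (rule DERIV_nonpos_imp_nonincreasing[OF True])
      fix y assume "x \<le> y" "y \<le> 1"
      then have y: "0 < y" "y \<le> 1" using x by linarith+
      have "4 * ((y+1) * ln y - 2*(y-1)) \<le> 0" using hfun_sign[OF y(1)] y(2) by simp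
      then show "\<exists>D. DERIV ?g y :> D \<and> D \<le> 0" using d[OF y(1)] by blast
    qed
    then show ?thesis by simp
  next
    case False
    have x1: "1 \<le> x" using False by simp
    have "?g 1 \<le> ?g x"
    proof (rule DERIV_nonneg_imp_nondecreasing[OF x1])
      fix y assume "1 \<le> y" "y \<le> x"
      then have y: "0 < y" "1 \<le> y" by linarith+
      have "0 \<le> 4 * ((y+1) * ln y - 2*(y-1))" using hfun_sign[OF y(1)] y(2) by simp
      then show "\<exists>D. DERIV ?g y :> D \<and> 0 \<le> D" using d[OF y(1)] by blast
    qed
    then show ?thesis by simp
  qed
  then show ?thesis by simp
qed

lemma pinsker_t:
  fixes x t :: real
  assumes x: "0 < x" and t: "0 < t"
  shows "\<bar>x - 1\<bar> \<le> (t * ((2*x + 4)/3) + (x * ln x - x + 1) / t) / 2"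
proof -
  let ?a = "(2*x + 4)/3" and ?b = "x * ln x - x + 1"
  have ab: "(x - 1)^2 \<le> ?a * ?b" using pinsker_pt[OF x] by simp
  have a0': "0 < ?a" using x by simp
  have "0 \<le> ?a * ?b" using ab by (meson order_trans zero_le_power2)
  then have b0: "0 \<le> ?b" using a0' by (simp add: zero_le_mult_iff)
  have a0: "0 \<le> ?a" using x by simp
  have sq: "(\<bar>x - 1\<bar>)^2 \<le> ((t * ?a + ?b / t) / 2)^2"
  proof -
    have "((t * ?a + ?b / t) / 2)^2 - ?a * ?b = ((t * ?a - ?b / t) / 2)^2"
      using t by (simp add: power2_eq_square field_simps)
    then have "?a * ?b \<le> ((t * ?a + ?b / t) / 2)^2" by (metis diff_ge_0_iff_ge zero_le_power2)
    then show ?thesis using ab by (simp add: power2_abs)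
  qed
  have "0 \<le> (t * ?a + ?b / t) / 2" using a0 b0 t by simp
  then show ?thesis using sq by (meson abs_ge_zero power2_le_imp_le)
qed


definition gain :: "nat \<Rightarrow> nat \<Rightarrow> (nat \<Rightarrow> nat) \<Rightarrow> policy \<Rightarrow> real" where
  "gain m A \<theta> \<pi> = (\<Sum>s\<in>{2..<m+2}. \<Sum>a<A. (if a = \<theta> s then \<pi> s a else 0))"

lemma sum_lin: "(\<Sum>a\<in>B. (r::real) * (c * f a - e * g a)) = r * (c * sum f B - e * sum g B)"
proof -
  have "(\<Sum>a\<in>B. r * (c * f a - e * g a)) = r * (\<Sum>a\<in>B. c * f a - e * g a)"
    by (rule sum_distrib_left[symmetric])
  also have "(\<Sum>a\<in>B. c * f a - e * g a) = (\<Sum>a\<in>B. c * f a) - (\<Sum>a\<in>B. e * g a)"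
    by (rule sum_subtractf)
  also have "(\<Sum>a\<in>B. c * f a) = c * sum f B" by (rule sum_distrib_left[symmetric])
  also have "(\<Sum>a\<in>B. e * g a) = e * sum g B" by (rule sum_distrib_left[symmetric])
  finally show ?thesis .
qed

lemma D1_val:
  assumes S: "m + 2 \<le> S" and st: "stoch_policy S A \<pi>" and m1: "1 \<le> m"
  shows "state_dist S A (Pk m \<epsilon> \<theta>) (d0k m) \<pi> 1 1 = 1/2 - \<epsilon> / m * gain m A \<theta> \<pi>"
    and "\<And>s'. 2 \<le> s' \<Longrightarrow> state_dist S A (Pk m \<epsilon> \<theta>) (d0k m) \<pi> 1 s' = 0"
proof -
  have pd: "(\<Sum>a<A. \<pi> s a) = 1" if "s < S" for s using st that by (auto simp: stoch_policy_def is_distr_def)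
  have "state_dist S A (Pk m \<epsilon> \<theta>) (d0k m) \<pi> 1 1 = (\<Sum>s<S. \<Sum>a<A. d0k m s * \<pi> s a * Pk m \<epsilon> \<theta> s a 1)"
    by simp
  also have "\<dots> = (\<Sum>s\<in>{2..<m+2}. \<Sum>a<A. d0k m s * \<pi> s a * Pk m \<epsilon> \<theta> s a 1)"
    using S by (intro sum.mono_neutral_right) (auto simp: d0k_def)
  also have "\<dots> = (\<Sum>s\<in>{2..<m+2}. (1 / real m) * ((1/2) * (\<Sum>a<A. \<pi> s a) - \<epsilon> * (\<Sum>a<A. (if a = \<theta> s then \<pi> s a else 0))))"
  proof (intro sum.cong refl)
    fix s assume s: "s \<in> {2..<m+2}"
    have "(\<Sum>a<A. d0k m s * \<pi> s a * Pk m \<epsilon> \<theta> s a 1) = (\<Sum>a<A. (1 / real m) * ((1/2) * \<pi> s a - \<epsilon> * (if a = \<theta> s then \<pi> s a else 0)))"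
      using s by (intro sum.cong refl) (auto simp: d0k_def Pk_def algebra_simps)
    also have "\<dots> = (1 / real m) * ((1/2) * (\<Sum>a<A. \<pi> s a) - \<epsilon> * (\<Sum>a<A. (if a = \<theta> s then \<pi> s a else 0)))"
      by (rule sum_lin)
    finally show "(\<Sum>a<A. d0k m s * \<pi> s a * Pk m \<epsilon> \<theta> s a 1) = (1 / real m) * ((1/2) * (\<Sum>a<A. \<pi> s a) - \<epsilon> * (\<Sum>a<A. (if a = \<theta> s then \<pi> s a else 0)))" .
  qed
  also have "\<dots> = (\<Sum>s\<in>{2..<m+2}. (1 / real m) * ((1/2) - \<epsilon> * (\<Sum>a<A. (if a = \<theta> s then \<pi> s a else 0))))"
    using S pd by (intro sum.cong refl) auto
  also have "\<dots> = (1 / real m) * (real m / 2 - \<epsilon> * gain m A \<theta> \<pi>)"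
  proof -
    let ?X = "\<lambda>s. (\<Sum>a<A. (if a = \<theta> s then \<pi> s a else 0))"
    have "(\<Sum>s\<in>{2..<m+2}. (1 / real m) * ((1/2) - \<epsilon> * ?X s)) = (1 / real m) * (\<Sum>s\<in>{2..<m+2}. (1/2) - \<epsilon> * ?X s)"
      by (rule sum_distrib_left[symmetric])
    also have "(\<Sum>s\<in>{2..<m+2}. (1/2) - \<epsilon> * ?X s) = (\<Sum>s\<in>{2..<m+2}. (1/2::real)) - (\<Sum>s\<in>{2..<m+2}. \<epsilon> * ?X s)"
      by (rule sum_subtractf)
    also have "(\<Sum>s\<in>{2..<m+2}. \<epsilon> * ?X s) = \<epsilon> * gain m A \<theta> \<pi>"
      unfolding gain_def by (rule sum_distrib_left[symmetric])
    also have "(\<Sum>s\<in>{2..<m+2}. (1/2::real)) = real m / 2" by simp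
    finally show ?thesis .
  qed
  finally show "state_dist S A (Pk m \<epsilon> \<theta>) (d0k m) \<pi> 1 1 = 1/2 - \<epsilon> / m * gain m A \<theta> \<pi>"
    using m1 by (simp add: field_simps)
  fix s' :: nat assume "2 \<le> s'"
  then show "state_dist S A (Pk m \<epsilon> \<theta>) (d0k m) \<pi> 1 s' = 0"
    by (simp del: state_dist.simps, simp only: state_dist.simps) (intro sum.neutral ballI, auto simp: Pk_def)
qed

lemma Dt_val:
  assumes S: "m + 2 \<le> S" and st: "stoch_policy S A \<pi>" and m1: "1 \<le> m"
  shows "state_dist S A (Pk m \<epsilon> \<theta>) (d0k m) \<pi> (Suc t) = state_dist S A (Pk m \<epsilon> \<theta>) (d0k m) \<pi> 1"
proof (induction t)
  case 0 then show ?case by simp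
next
  case (Suc t)
  let ?D = "state_dist S A (Pk m \<epsilon> \<theta>) (d0k m) \<pi> 1"
  have pd: "(\<Sum>a<A. \<pi> s a) = 1" if "s < S" for s using st that by (auto simp: stoch_policy_def is_distr_def)
  have z: "?D s = 0" if "2 \<le> s" for s using D1_val(2)[OF S st m1 that] .
  show ?case
  proof
    fix s'
    have "state_dist S A (Pk m \<epsilon> \<theta>) (d0k m) \<pi> (Suc (Suc t)) s' = (\<Sum>s<S. \<Sum>a<A. ?D s * \<pi> s a * Pk m \<epsilon> \<theta> s a s')"
      by (simp only: state_dist.simps(2)[of S A "Pk m \<epsilon> \<theta>" "d0k m" \<pi> "Suc t"] Suc.IH)
    also have "\<dots> = (\<Sum>s<2. \<Sum>a<A. ?D s * \<pi> s a * Pk m \<epsilon> \<theta> s a s')"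
      using S z by (intro sum.mono_neutral_right) auto
    also have "\<dots> = (\<Sum>s<2. ?D s * (if s' = s then 1 else 0) * (\<Sum>a<A. \<pi> s a))"
      by (intro sum.cong refl) (auto simp: Pk_def sum_distrib_left sum_distrib_right mult_ac simp del: state_dist.simps)
    also have "\<dots> = (\<Sum>s<2. ?D s * (if s' = s then 1 else 0))"
      using S pd by (intro sum.cong refl) auto
    also have "\<dots> = ?D s'"
    proof (cases "s' < 2")
      case True
      then have "s' = 0 \<or> s' = 1" by auto
      then show ?thesis by (auto simp: numeral_2_eq_2 lessThan_Suc simp del: state_dist.simps)
    next
      case False
      then show ?thesis using z[of s'] by (simp add: numeral_2_eq_2 lessThan_Suc del: state_dist.simps)
    qed
    finally show "state_dist S A (Pk m \<epsilon> \<theta>) (d0k m) \<pi> (Suc (Suc t)) s' = ?D s'" .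
  qed
qed

lemma value_formula:
  assumes S: "m + 2 \<le> S" and st: "stoch_policy S A \<pi>" and m1: "1 \<le> m" and g: "0 \<le> \<gamma>" "\<gamma> < 1"
  shows "value_fn S A (Pk m \<epsilon> \<theta>) (d0k m) lk \<gamma> \<pi> = \<gamma> / (1 - \<gamma>) * (1/2 - \<epsilon> / m * gain m A \<theta> \<pi>)"
proof -
  let ?D = "state_dist S A (Pk m \<epsilon> \<theta>) (d0k m) \<pi>"
  let ?c = "1/2 - \<epsilon> / m * gain m A \<theta> \<pi>"
  have pd: "(\<Sum>a<A. \<pi> s a) = 1" if "s < S" for s using st that by (auto simp: stoch_policy_def is_distr_def)
  have L: "(\<Sum>s<S. \<Sum>a<A. ?D t s * \<pi> s a * lk s a) = ?D t 1" for t
  proof -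
    have "(\<Sum>s<S. \<Sum>a<A. ?D t s * \<pi> s a * lk s a) = (\<Sum>s\<in>{1}. \<Sum>a<A. ?D t s * \<pi> s a * lk s a)"
      using S by (intro sum.mono_neutral_right) (auto simp: lk_def)
    also have "\<dots> = ?D t 1 * (\<Sum>a<A. \<pi> 1 a)" by (simp add: lk_def sum_distrib_left)
    finally show ?thesis using pd[of 1] S by simp
  qed
  have L0: "?D 0 1 = 0" by (simp add: d0k_def)
  have LS: "?D (Suc t) 1 = ?c" for t using Dt_val[OF S st m1] D1_val(1)[OF S st m1] by metis
  have LS': "?D (Suc t) (Suc 0) = ?c" for t using LS[of t] by (simp only: One_nat_def)
  have "(\<lambda>n. \<gamma> ^ Suc n * ?D (Suc n) 1) sums (\<gamma> * ?c / (1 - \<gamma>))"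
  proof -
    have "(\<lambda>n. \<gamma> ^ n) sums (1 / (1 - \<gamma>))" using g by (intro geometric_sums) simp
    from sums_mult[OF this, of "\<gamma> * ?c"] have "(\<lambda>n. (\<gamma> * ?c) * \<gamma> ^ n) sums ((\<gamma> * ?c) * (1 / (1 - \<gamma>)))" .
    moreover have "(\<lambda>n. \<gamma> ^ Suc n * ?D (Suc n) 1) = (\<lambda>n. (\<gamma> * ?c) * \<gamma> ^ n)"
    proof
      fix n show "\<gamma> ^ Suc n * ?D (Suc n) 1 = (\<gamma> * ?c) * \<gamma> ^ n" unfolding LS power_Suc by (simp only: mult_ac)
    qed
    ultimately show ?thesis by simp
  qed
  then have "(\<lambda>n. \<gamma> ^ n * ?D n 1) sums (\<gamma> * ?c / (1 - \<gamma>))"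
    using sums_Suc_iff[of "\<lambda>n. \<gamma> ^ n * ?D n 1"] L0 by (simp del: state_dist.simps)
  then show ?thesis unfolding value_fn_def L by (simp add: sums_iff del: state_dist.simps)
qed




lemma box1: "s < S \<Longrightarrow> \<bar>(f::nat\<Rightarrow>real) s\<bar> \<le> (\<Sum>s<S. \<bar>f s\<bar>)"
  by (rule member_le_sum) auto

lemma box2: "s < S \<Longrightarrow> a < A \<Longrightarrow> \<bar>(f::nat\<Rightarrow>nat\<Rightarrow>real) s a\<bar> \<le> (\<Sum>s<S. \<Sum>a<A. \<bar>f s a\<bar>)"
proof -
  assume s: "s < S" and a: "a < A"
  have "\<bar>f s a\<bar> \<le> (\<Sum>a<A. \<bar>f s a\<bar>)" using a by (rule box1)
  also have "\<dots> \<le> (\<Sum>s<S. \<Sum>a<A. \<bar>f s a\<bar>)" using s by (intro member_le_sum) (auto intro: sum_nonneg)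
  finally show ?thesis .
qed

lemma box3: "s < S \<Longrightarrow> a < A \<Longrightarrow> s' < S \<Longrightarrow> \<bar>(f::nat\<Rightarrow>nat\<Rightarrow>nat\<Rightarrow>real) s a s'\<bar> \<le> (\<Sum>s<S. \<Sum>a<A. \<Sum>s'<S. \<bar>f s a s'\<bar>)"
proof -
  assume s: "s < S" and a: "a < A" and s': "s' < S"
  have "\<bar>f s a s'\<bar> \<le> (\<Sum>s'<S. \<bar>f s a s'\<bar>)" using s' by (rule box1)
  also have "\<dots> \<le> (\<Sum>s<S. \<Sum>a<A. \<Sum>s'<S. \<bar>f s a s'\<bar>)"
    using box2[OF s a, of "\<lambda>s a. \<Sum>s'<S. \<bar>f s a s'\<bar>"] by (simp add: abs_of_nonneg sum_nonneg)
  finally show ?thesis .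
qed

lemma T3:
  fixes h3 :: "nat \<Rightarrow> nat \<Rightarrow> nat \<Rightarrow> real"
  assumes S2: "2 \<le> S" and A0: "0 < A" and e: "0 \<le> \<epsilon>" "\<epsilon> \<le> 1/2" and d0: "is_distr S d0"
    and st: "\<And>s. s < S \<Longrightarrow> is_distr A (pol s)"
  shows "(\<integral>r. h3 (fst (traj S A (Pk m \<epsilon> \<theta>) d0 pol (\<lambda>t. r (j,t)) 0)) (snd (traj S A (Pk m \<epsilon> \<theta>) d0 pol (\<lambda>t. r (j,t)) 0))
               (fst (traj S A (Pk m \<epsilon> \<theta>) d0 pol (\<lambda>t. r (j,t)) 1)) \<partial>seed_space)
    = (\<Sum>s0<S. \<Sum>a0<A. \<Sum>s1<S. d0 s0 * pol s0 a0 * Pk m \<epsilon> \<theta> s0 a0 s1 * h3 s0 a0 s1)"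
proof -
  let ?P = "Pk m \<epsilon> \<theta>"
  define S0 where "S0 r = smp d0 S (r (j,0))" for r :: "nat \<times> nat \<Rightarrow> real"
  define A0 where "A0 r = smp (pol (S0 r)) A (r (j,1))" for r
  define S1 where "S1 r = smp (?P (S0 r) (A0 r)) S (r (j,2))" for r
  have S0m: "S0 \<in> measurable seed_space (count_space UNIV)" unfolding S0_def
    by (rule smp_meas[where p="\<lambda>_. d0"]) (auto intro: seed_comp)
  have A0m: "A0 \<in> measurable seed_space (count_space UNIV)" unfolding A0_def
    by (rule measurable_compose_countable[where f="\<lambda>s r. smp (pol s) A (r (j,1))", OF _ S0m])
       (rule smp_meas, auto intro: seed_comp)
  have SAm: "(\<lambda>r. (S0 r, A0 r)) \<in> measurable seed_space (count_space UNIV)" by (rule count_pair_meas[OF S0m A0m])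
  have S1m: "S1 \<in> measurable seed_space (count_space UNIV)"
  proof -
    have "(\<lambda>r. (\<lambda>(s,a) r. smp (?P s a) S (r (j,2))) (S0 r, A0 r) r) \<in> measurable seed_space (count_space UNIV)"
      by (rule measurable_compose_countable[OF _ SAm]) (auto intro!: smp_meas[where p="\<lambda>_. ?P _ _"] seed_comp)
    then show ?thesis unfolding S1_def by simp
  qed
  have S0l: "S0 r < S" for r unfolding S0_def using S2 by (intro smp_lt_gen) auto
  have A0l: "A0 r < A" for r unfolding A0_def using A0 by (intro smp_lt_gen) auto
  have S1l: "S1 r < S" for r unfolding S1_def using S2 by (intro smp_lt_gen) auto
  have eq: "h3 (fst (traj S A ?P d0 pol (\<lambda>t. r (j,t)) 0)) (snd (traj S A ?P d0 pol (\<lambda>t. r (j,t)) 0))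
               (fst (traj S A ?P d0 pol (\<lambda>t. r (j,t)) 1)) = h3 (S0 r) (A0 r) (S1 r)" for r
    by (subst (1 2 3) traj_dec) (simp add: TR_01 S0_def A0_def S1_def)
  define g2 where "g2 s a = (\<Sum>s1<S. ?P s a s1 * h3 s a s1)" for s a
  define g1 where "g1 s = (\<Sum>a<A. pol s a * g2 s a)" for s
  have stepA: "(\<integral>r. h3 (S0 r) (A0 r) (S1 r) \<partial>seed_space) = (\<integral>r. g2 (S0 r) (A0 r) \<partial>seed_space)"
  proof -
    have m: "(\<lambda>r. h3 (S0 r) (A0 r) (S1 r)) \<in> borel_measurable seed_space"
    proof -
      have "(\<lambda>r. ((S0 r, A0 r), S1 r)) \<in> measurable seed_space (count_space UNIV)" by (rule count_pair_meas[OF SAm S1m])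
      from count_to_borel[OF this, of "\<lambda>((s,a),s'). h3 s a s'"] show ?thesis by simp
    qed
    have "(\<integral>r. h3 (S0 r) (A0 r) (S1 r) \<partial>seed_space) = (\<integral>\<omega>. (\<integral>x. h3 (S0 (fun_upd \<omega> (j,2) x)) (A0 (fun_upd \<omega> (j,2) x)) (S1 (fun_upd \<omega> (j,2) x)) \<partial>U) \<partial>seed_space)"
      by (rule int_upd[OF m]) (rule box3[OF S0l A0l S1l])
    also have "\<dots> = (\<integral>r. g2 (S0 r) (A0 r) \<partial>seed_space)"
    proof (rule Bochner_Integration.integral_cong[OF refl])
      fix \<omega> :: "nat \<times> nat \<Rightarrow> real"
      have "S0 (fun_upd \<omega> (j,2) x) = S0 \<omega>" "A0 (fun_upd \<omega> (j,2) x) = A0 \<omega>"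
           "S1 (fun_upd \<omega> (j,2) x) = smp (?P (S0 \<omega>) (A0 \<omega>)) S x" for x
        by (simp_all add: S0_def A0_def S1_def)
      then have "(\<integral>x. h3 (S0 (fun_upd \<omega> (j,2) x)) (A0 (fun_upd \<omega> (j,2) x)) (S1 (fun_upd \<omega> (j,2) x)) \<partial>U) =
          (\<integral>x. h3 (S0 \<omega>) (A0 \<omega>) (smp (?P (S0 \<omega>) (A0 \<omega>)) S x) \<partial>U)" by simp
      also have "\<dots> = g2 (S0 \<omega>) (A0 \<omega>)" unfolding g2_def
        by (rule int_smp[OF Pk_distr[OF S2 e]])
      finally show "(\<integral>x. h3 (S0 (fun_upd \<omega> (j,2) x)) (A0 (fun_upd \<omega> (j,2) x)) (S1 (fun_upd \<omega> (j,2) x)) \<partial>U) = g2 (S0 \<omega>) (A0 \<omega>)" .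
    qed
    finally show ?thesis .
  qed
  have stepB: "(\<integral>r. g2 (S0 r) (A0 r) \<partial>seed_space) = (\<integral>r. g1 (S0 r) \<partial>seed_space)"
  proof -
    have m: "(\<lambda>r. g2 (S0 r) (A0 r)) \<in> borel_measurable seed_space"
      using count_to_borel[OF SAm, of "\<lambda>(s,a). g2 s a"] by simp
    have "(\<integral>r. g2 (S0 r) (A0 r) \<partial>seed_space) = (\<integral>\<omega>. (\<integral>x. g2 (S0 (fun_upd \<omega> (j,1) x)) (A0 (fun_upd \<omega> (j,1) x)) \<partial>U) \<partial>seed_space)"
      by (rule int_upd[OF m]) (rule box2[OF S0l A0l])
    also have "\<dots> = (\<integral>r. g1 (S0 r) \<partial>seed_space)"
    proof (rule Bochner_Integration.integral_cong[OF refl])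
      fix \<omega> :: "nat \<times> nat \<Rightarrow> real"
      have "S0 (fun_upd \<omega> (j,1) x) = S0 \<omega>" "A0 (fun_upd \<omega> (j,1) x) = smp (pol (S0 \<omega>)) A x" for x
        by (simp_all add: S0_def A0_def)
      then have "(\<integral>x. g2 (S0 (fun_upd \<omega> (j,1) x)) (A0 (fun_upd \<omega> (j,1) x)) \<partial>U) =
          (\<integral>x. g2 (S0 \<omega>) (smp (pol (S0 \<omega>)) A x) \<partial>U)" by simp
      also have "\<dots> = g1 (S0 \<omega>)" unfolding g1_def
        by (rule int_smp[OF st[OF S0l]])
      finally show "(\<integral>x. g2 (S0 (fun_upd \<omega> (j,1) x)) (A0 (fun_upd \<omega> (j,1) x)) \<partial>U) = g1 (S0 \<omega>)" .
    qed
    finally show ?thesis .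
  qed
  have stepC: "(\<integral>r. g1 (S0 r) \<partial>seed_space) = (\<Sum>s<S. d0 s * g1 s)"
  proof -
    interpret SP: prob_space seed_space by (rule prob_seed)
    have m: "(\<lambda>r. g1 (S0 r)) \<in> borel_measurable seed_space"
      using count_to_borel[OF S0m, of g1] by simp
    have "(\<integral>r. g1 (S0 r) \<partial>seed_space) = (\<integral>\<omega>. (\<integral>x. g1 (S0 (fun_upd \<omega> (j,0) x)) \<partial>U) \<partial>seed_space)"
      by (rule int_upd[OF m]) (rule box1[OF S0l])
    also have "\<dots> = (\<integral>\<omega>. (\<Sum>s<S. d0 s * g1 s) \<partial>seed_space)"
    proof (rule Bochner_Integration.integral_cong[OF refl])
      fix \<omega> :: "nat \<times> nat \<Rightarrow> real"
      have "S0 (fun_upd \<omega> (j,0) x) = smp d0 S x" for x by (simp add: S0_def)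
      then show "(\<integral>x. g1 (S0 (fun_upd \<omega> (j,0) x)) \<partial>U) = (\<Sum>s<S. d0 s * g1 s)"
        using int_smp[OF d0, of g1] by simp
    qed
    also have "\<dots> = (\<Sum>s<S. d0 s * g1 s)" using SP.prob_space by simp
    finally show ?thesis .
  qed
  have "(\<Sum>s<S. d0 s * g1 s) = (\<Sum>s0<S. \<Sum>a0<A. \<Sum>s1<S. d0 s0 * pol s0 a0 * ?P s0 a0 s1 * h3 s0 a0 s1)"
    by (simp add: g1_def g2_def sum_distrib_left mult_ac)
  then show ?thesis using stepA stepB stepC eq by simp
qed



lemma run_pol:
  "k < K \<Longrightarrow> fst (run S A P d0 l Alg K \<omega> ! k) = pik Alg l k (\<omega> (0,0)) (run S A P d0 l Alg k \<omega>)"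
proof -
  assume k: "k < K"
  have "run S A P d0 l Alg K \<omega> ! k = run S A P d0 l Alg (Suc k) \<omega> ! k" by (rule run_nth[OF k])
  then show ?thesis by (simp only: run_last pik_def fst_conv)
qed

lemma run_stoch:
  assumes "valid_alg S A Alg" "k < K"
  shows "stoch_policy S A (fst (run S A P d0 l Alg K \<omega> ! k))"
  using assms by (simp add: run_pol pik_def valid_alg_def)

lemma ratio_lb:
  assumes "0 \<le> \<epsilon>" "\<epsilon> \<le> 1/4"
  shows "1/3 \<le> ratio (Pk m \<epsilon> \<theta>) (Pk m \<epsilon> \<theta>') s0 a0 s1"
proof -
  have q: "Pk m \<epsilon> \<theta>' s0 a0 s1 \<le> 3/4 \<or> Pk m \<epsilon> \<theta>' s0 a0 s1 = 1" using assms by (auto simp: Pk_def)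
  have p: "1/4 \<le> Pk m \<epsilon> \<theta> s0 a0 s1 \<or> Pk m \<epsilon> \<theta> s0 a0 s1 = 0" using assms by (auto simp: Pk_def)
  have pq1: "Pk m \<epsilon> \<theta>' s0 a0 s1 = 1 \<Longrightarrow> Pk m \<epsilon> \<theta> s0 a0 s1 = 1" using assms by (auto simp: Pk_def split: if_splits)
  have pq0: "Pk m \<epsilon> \<theta> s0 a0 s1 = 0 \<Longrightarrow> Pk m \<epsilon> \<theta>' s0 a0 s1 = 0" using assms by (auto simp: Pk_def split: if_splits)
  show ?thesis
  proof (cases "Pk m \<epsilon> \<theta>' s0 a0 s1 = 0")
    case True then show ?thesis by (simp add: ratio_def)
  next
    case False
    show ?thesis
    proof (cases "Pk m \<epsilon> \<theta>' s0 a0 s1 = 1")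
      case True then show ?thesis using pq1 by (simp add: ratio_def)
    next
      case f2: False
      have q0: "0 < Pk m \<epsilon> \<theta>' s0 a0 s1" using False assms by (auto simp: Pk_def split: if_splits)
      have "1/4 \<le> Pk m \<epsilon> \<theta> s0 a0 s1" using p pq0 False by auto
      then show ?thesis using q f2 q0 False by (auto simp: ratio_def field_simps)
    qed
  qed
qed

lemma ln_ratio_bnd:
  assumes "0 \<le> \<epsilon>" "\<epsilon> \<le> 1/4"
  shows "\<bar>ln (ratio (Pk m \<epsilon> \<theta>) (Pk m \<epsilon> \<theta>') s0 a0 s1)\<bar> \<le> 2"
proof -
  let ?r = "ratio (Pk m \<epsilon> \<theta>) (Pk m \<epsilon> \<theta>') s0 a0 s1"
  have l: "1/3 \<le> ?r" by (rule ratio_lb[OF assms])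
  have u: "?r \<le> 3" using ratio_bnd[OF assms] by blast
  have "ln ?r \<le> ?r - 1" using l by (intro ln_le_minus_one) simp
  moreover have "ln (1/?r) \<le> 1/?r - 1" using l by (intro ln_le_minus_one) simp
  moreover have "1/?r \<le> 3" using l by (simp add: field_simps)
  moreover have "ln (1/?r) = - ln ?r" using l by (simp add: ln_div)
  ultimately show ?thesis using u by linarith
qed

lemma d0k_distr:
  assumes "1 \<le> m" "m + 2 \<le> S"
  shows "is_distr S (d0k m)"
proof -
  have "(\<Sum>i<S. d0k m i) = (\<Sum>i\<in>{2..<m+2}. d0k m i)"
    using assms by (intro sum.mono_neutral_right) (auto simp: d0k_def)
  also have "\<dots> = 1" using assms by (simp add: d0k_def)
  finally show ?thesis unfolding is_distr_def by (auto simp: d0k_def)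
qed

lemma ratio_one:
  assumes "\<not> (s0 = s \<and> a0 = a)" "a0 < A"
  shows "ratio (Pk m \<epsilon> (\<theta>0(s := A))) (Pk m \<epsilon> (\<theta>0(s := a))) s0 a0 s1 = 1"
proof -
  have "Pk m \<epsilon> (\<theta>0(s := A)) s0 a0 s1 = Pk m \<epsilon> (\<theta>0(s := a)) s0 a0 s1"
    using assms by (auto simp: Pk_def)
  then show ?thesis by (simp add: ratio_def)
qed

definition kap :: "nat \<Rightarrow> nat \<Rightarrow> real \<Rightarrow> (nat \<Rightarrow> nat) \<Rightarrow> nat \<Rightarrow> nat \<Rightarrow> nat \<Rightarrow> real" where
  "kap S A \<epsilon> \<theta>0 m s a = (\<Sum>s1<S. Pk m \<epsilon> (\<theta>0(s := A)) s a s1 * ln (ratio (Pk m \<epsilon> (\<theta>0(s := A))) (Pk m \<epsilon> (\<theta>0(s := a))) s a s1))"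

lemma sum_KL:
  assumes s: "s < S" and a: "a < A"
  shows "(\<Sum>s0<S. \<Sum>a0<A. \<Sum>s1<S. d0 s0 * pol s0 a0 * Pk m \<epsilon> (\<theta>0(s := A)) s0 a0 s1 *
      ln (ratio (Pk m \<epsilon> (\<theta>0(s := A))) (Pk m \<epsilon> (\<theta>0(s := a))) s0 a0 s1)) = d0 s * pol s a * kap S A \<epsilon> \<theta>0 m s a"
proof -
  let ?F = "\<lambda>s0 a0. \<Sum>s1<S. d0 s0 * pol s0 a0 * Pk m \<epsilon> (\<theta>0(s := A)) s0 a0 s1 *
      ln (ratio (Pk m \<epsilon> (\<theta>0(s := A))) (Pk m \<epsilon> (\<theta>0(s := a))) s0 a0 s1)"
  have "(\<Sum>s0<S. \<Sum>a0<A. ?F s0 a0) = (\<Sum>s0<S. \<Sum>a0<A. if s0 = s \<and> a0 = a then ?F s a else 0)"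
    by (intro sum.cong refl) (auto simp: ratio_one)
  also have "\<dots> = ?F s a"
  proof -
    have i: "(\<Sum>a0<A. if s0 = s \<and> a0 = a then c else 0) = (if s0 = s then c else 0)" for s0 and c :: real
      using a by (cases "s0 = s") (simp_all add: sum.delta)
    show ?thesis unfolding i using s by (simp add: sum.delta)
  qed
  also have "\<dots> = d0 s * pol s a * kap S A \<epsilon> \<theta>0 m s a"
    by (simp add: kap_def sum_distrib_left mult_ac)
  finally show ?thesis .
qed

lemma kap_bnd:
  assumes e: "0 \<le> \<epsilon>" "\<epsilon> \<le> 1/4" and s: "2 \<le> s" "s < m + 2" and a: "a < A" and S: "2 \<le> S"
  shows "kap S A \<epsilon> \<theta>0 m s a \<le> 6 * \<epsilon>^2"
proof -
  let ?Q = "Pk m \<epsilon> (\<theta>0(s := A))" and ?P = "Pk m \<epsilon> (\<theta>0(s := a))"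
  have "kap S A \<epsilon> \<theta>0 m s a = (\<Sum>s1<2. ?Q s a s1 * ln (ratio ?Q ?P s a s1))"
    unfolding kap_def using S s by (intro sum.mono_neutral_right) (auto simp: Pk_def)
  also have "\<dots> = (1/2) * ln ((1/2) / (1/2 + \<epsilon>)) + (1/2) * ln ((1/2) / (1/2 - \<epsilon>))"
    using s a e by (simp add: numeral_2_eq_2 lessThan_Suc Pk_def ratio_def)
  also have "\<dots> \<le> (1/2) * ((1/2) / (1/2 + \<epsilon>) - 1) + (1/2) * ((1/2) / (1/2 - \<epsilon>) - 1)"
    using e by (intro add_mono mult_left_mono ln_le_minus_one) auto
  also have "\<dots> = 4 * \<epsilon>^2 / (1 - 4 * \<epsilon>^2)"
    using e by (simp add: field_simps power2_eq_square)
  also have "\<dots> \<le> 6 * \<epsilon>^2"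
  proof -
    have "\<epsilon> * \<epsilon> \<le> (1/4) * (1/4)" using e by (intro mult_mono) auto
    then have "\<epsilon>^2 \<le> 1/16" by (simp add: power2_eq_square)
    then have "2/3 \<le> 1 - 4 * \<epsilon>^2" by simp
    then have D: "0 < 1 - 4 * \<epsilon>^2" by simp
    have "6 * \<epsilon>^2 * (2/3) \<le> 6 * \<epsilon>^2 * (1 - 4 * \<epsilon>^2)"
      using \<open>2/3 \<le> 1 - 4 * \<epsilon>^2\<close> by (intro mult_left_mono) auto
    then have "4 * \<epsilon>^2 \<le> 6 * \<epsilon>^2 * (1 - 4 * \<epsilon>^2)" by simp
    then show ?thesis by (simp add: pos_divide_le_eq[OF D])
  qed
  finally show ?thesis .
qed

lemma KLstep:
  assumes va: "valid_alg S A Alg" and S: "m + 2 \<le> S" and m1: "1 \<le> m" and A0: "0 < A"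
    and e: "0 \<le> \<epsilon>" "\<epsilon> \<le> 1/4" and s: "2 \<le> s" "s < m + 2" and a: "a < A" and k: "k < K"
  shows "(\<integral>\<omega>. ln (wfk (Pk m \<epsilon> (\<theta>0(s := A))) (Pk m \<epsilon> (\<theta>0(s := a))) (snd (run S A (Pk m \<epsilon> (\<theta>0(s := A))) (d0k m) lk Alg K \<omega> ! k))) \<partial>seed_space)
    = (\<integral>\<omega>. (1 / real m) * fst (run S A (Pk m \<epsilon> (\<theta>0(s := A))) (d0k m) lk Alg K \<omega> ! k) s a * kap S A \<epsilon> \<theta>0 m s a \<partial>seed_space)"
proof -
  let ?Q = "Pk m \<epsilon> (\<theta>0(s := A))" and ?P = "Pk m \<epsilon> (\<theta>0(s := a))"
  let ?R = "run S A ?Q (d0k m) lk Alg"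
  define pi where "pi \<omega> = pik Alg lk k (\<omega> (0,0)) (?R k \<omega>)" for \<omega>
  define f where "f \<omega> = ln (wfk ?Q ?P (snd (?R (Suc k) \<omega> ! k)))" for \<omega>
  have S2: "2 \<le> S" using S by simp
  have e2: "\<epsilon> \<le> 1/2" using e by simp
  have lhs: "ln (wfk ?Q ?P (snd (?R K \<omega> ! k))) = f \<omega>" for \<omega> unfolding f_def by (simp only: run_nth[OF k])
  have fm: "f \<in> borel_measurable seed_space"
  proof -
    have "(\<lambda>\<omega>. (snd (?R (Suc k) \<omega> ! k) 0, snd (?R (Suc k) \<omega> ! k) 1)) \<in> measurable seed_space (count_space UNIV)"
      by (intro count_pair_meas conjunct2[OF run_meas[OF va]]) simp_all
    from count_to_borel[OF this, of "\<lambda>(x,y). ln (ratio ?Q ?P (fst x) (snd x) (fst y))"] show ?thesis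
      unfolding f_def wfk_def by (simp del: run.simps)
  qed
  have fb: "\<bar>f \<omega>\<bar> \<le> 2" for \<omega> unfolding f_def wfk_def by (rule ln_ratio_bnd[OF e])
  have "(\<integral>\<omega>. f \<omega> \<partial>seed_space) = (\<integral>\<omega>. (\<integral>r. f (mrg (rowset (Suc k)) \<omega> r) \<partial>seed_space) \<partial>seed_space)"
    by (rule int_mrg[OF fm fb])
  also have "\<dots> = (\<integral>\<omega>. (1 / real m) * pi \<omega> s a * kap S A \<epsilon> \<theta>0 m s a \<partial>seed_space)"
  proof (rule Bochner_Integration.integral_cong[OF refl])
    fix \<omega> :: "nat \<times> nat \<Rightarrow> real"
    have fm: "f (mrg (rowset (Suc k)) \<omega> r) = ln (wfk ?Q ?P (traj S A ?Q (d0k m) (pi \<omega>) (\<lambda>t. r (Suc k, t))))" for r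
      unfolding f_def run_last mrg_00 run_mrg mrg_row pi_def pik_def by simp
    have st: "is_distr A (pi \<omega> s')" if "s' < S" for s'
      using va that unfolding pi_def pik_def valid_alg_def stoch_policy_def by blast
    have "(\<integral>r. f (mrg (rowset (Suc k)) \<omega> r) \<partial>seed_space) =
      (\<integral>r. (\<lambda>s0 a0 s1. ln (ratio ?Q ?P s0 a0 s1)) (fst (traj S A ?Q (d0k m) (pi \<omega>) (\<lambda>t. r (Suc k, t)) 0))
           (snd (traj S A ?Q (d0k m) (pi \<omega>) (\<lambda>t. r (Suc k, t)) 0)) (fst (traj S A ?Q (d0k m) (pi \<omega>) (\<lambda>t. r (Suc k, t)) 1)) \<partial>seed_space)"
      unfolding fm wfk_def ..
    also have "\<dots> = (\<Sum>s0<S. \<Sum>a0<A. \<Sum>s1<S. d0k m s0 * pi \<omega> s0 a0 * ?Q s0 a0 s1 * ln (ratio ?Q ?P s0 a0 s1))"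
      by (rule T3[OF S2 A0 e(1) e2 d0k_distr[OF m1 S] st])
    also have "\<dots> = d0k m s * pi \<omega> s a * kap S A \<epsilon> \<theta>0 m s a"
      using S s a by (intro sum_KL) auto
    also have "\<dots> = (1 / real m) * pi \<omega> s a * kap S A \<epsilon> \<theta>0 m s a"
      using s by (simp add: d0k_def)
    finally show "(\<integral>r. f (mrg (rowset (Suc k)) \<omega> r) \<partial>seed_space) = (1 / real m) * pi \<omega> s a * kap S A \<epsilon> \<theta>0 m s a" .
  qed
  finally show ?thesis unfolding lhs run_pol[OF k] pi_def .
qed



lemma pol_bnd:
  assumes "stoch_policy S A pol" "s < S" "a < A"
  shows "0 \<le> pol s a \<and> pol s a \<le> 1"
proof -
  have d: "is_distr A (pol s)" using assms by (simp add: stoch_policy_def)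
  then have nn: "\<forall>i<A. 0 \<le> pol s i" and s1: "(\<Sum>i<A. pol s i) = 1" by (auto simp: is_distr_def)
  have "pol s a \<le> (\<Sum>i<A. pol s i)" using nn assms(3) by (intro member_le_sum) auto
  then show ?thesis using nn s1 assms(3) by auto
qed

definition Xf :: "nat \<Rightarrow> nat \<Rightarrow> nat \<Rightarrow> (policy \<times> trajectory) list \<Rightarrow> real" where
  "Xf K s a h = (\<Sum>k<K. max 0 (min 1 (fst (h ! k) s a)))"

definition Lf :: "nat \<Rightarrow> kernel \<Rightarrow> kernel \<Rightarrow> (policy \<times> trajectory) list \<Rightarrow> real" where
  "Lf K P Q h = (\<Sum>k<K. ln (wfk P Q (snd (h ! k))))"

lemma Xf_run:
  assumes va: "valid_alg S A Alg" and "s < S" "a < A"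
  shows "Xf K s a (run S A P d0 l Alg K \<omega>) = (\<Sum>k<K. fst (run S A P d0 l Alg K \<omega> ! k) s a)"
  unfolding Xf_def
proof (intro sum.cong refl)
  fix k assume k: "k \<in> {..<K}"
  have st: "stoch_policy S A (fst (run S A P d0 l Alg K \<omega> ! k))" using run_stoch[OF va, of k K] k by simp
  have "0 \<le> fst (run S A P d0 l Alg K \<omega> ! k) s a \<and> fst (run S A P d0 l Alg K \<omega> ! k) s a \<le> 1"
    by (rule pol_bnd[OF st assms(2) assms(3)])
  then show "max 0 (min 1 (fst (run S A P d0 l Alg K \<omega> ! k) s a)) = fst (run S A P d0 l Alg K \<omega> ! k) s a" by simp
qed

lemma Xf_bnd: "0 \<le> Xf K s a h \<and> Xf K s a h \<le> K"
proof -
  have "Xf K s a h \<le> (\<Sum>k<K. 1)" unfolding Xf_def by (intro sum_mono) simp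
  moreover have "0 \<le> Xf K s a h" unfolding Xf_def by (intro sum_nonneg) simp
  ultimately show ?thesis by simp
qed

lemma Xf_good: "goodG K (\<lambda>z h. Xf K s a h)"
  unfolding goodG_def Xf_def
proof (intro allI impI borel_measurable_sum)
  fix z h k assume g: "good_fam K z h" and k: "k \<in> {..<K}"
  have m: "(\<lambda>\<omega>. fst (h \<omega> ! k) s a) \<in> borel_measurable seed_space" using g k by (auto simp: good_fam_def)
  show "(\<lambda>\<omega>. max 0 (min 1 (fst (h \<omega> ! k) s a))) \<in> borel_measurable seed_space"
    by (intro borel_measurable_max borel_measurable_min borel_measurable_const m)
qed

lemma wfk_comp_meas:
  fixes g :: "real \<Rightarrow> real"
  assumes "\<And>t. (\<lambda>\<omega>. tr \<omega> t) \<in> measurable M (count_space UNIV)"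
  shows "(\<lambda>\<omega>. g (wfk P Q (tr \<omega>))) \<in> borel_measurable M"
proof -
  have "(\<lambda>\<omega>. (tr \<omega> 0, tr \<omega> 1)) \<in> measurable M (count_space UNIV)" by (intro count_pair_meas assms)
  from count_to_borel[OF this, of "\<lambda>(x,y). g (ratio P Q (fst x) (snd x) (fst y))"] show ?thesis
    by (simp add: wfk_def)
qed

lemma Lf_good: "goodG K (\<lambda>z h. Lf K P Q h)"
  unfolding goodG_def Lf_def
proof (intro allI impI borel_measurable_sum)
  fix z h k assume g: "good_fam K z h" and k: "k \<in> {..<K}"
  show "(\<lambda>\<omega>. ln (wfk P Q (snd (h \<omega> ! k)))) \<in> borel_measurable seed_space"
    by (rule wfk_comp_meas[where g=ln]) (use g k in \<open>auto simp: good_fam_def\<close>)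
qed

lemma Lf_bnd:
  assumes "0 \<le> \<epsilon>" "\<epsilon> \<le> 1/4"
  shows "\<bar>Lf K (Pk m \<epsilon> \<theta>) (Pk m \<epsilon> \<theta>') h\<bar> \<le> 2 * K"
proof -
  have "\<bar>Lf K (Pk m \<epsilon> \<theta>) (Pk m \<epsilon> \<theta>') h\<bar> \<le> (\<Sum>k<K. \<bar>ln (wfk (Pk m \<epsilon> \<theta>) (Pk m \<epsilon> \<theta>') (snd (h ! k)))\<bar>)"
    unfolding Lf_def by (rule sum_abs)
  also have "\<dots> \<le> (\<Sum>k<K. 2)" unfolding wfk_def by (intro sum_mono ln_ratio_bnd[OF assms])
  finally show ?thesis by simp
qed

lemma ratio_pos:
  assumes "0 \<le> \<epsilon>" "\<epsilon> \<le> 1/4"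
  shows "0 < ratio (Pk m \<epsilon> \<theta>) (Pk m \<epsilon> \<theta>') s0 a0 s1"
  by (rule less_le_trans[OF _ ratio_lb[OF assms]]) simp

lemma Wt_pos:
  assumes "0 \<le> \<epsilon>" "\<epsilon> \<le> 1/4"
  shows "0 < Wt (Pk m \<epsilon> \<theta>) (Pk m \<epsilon> \<theta>') h"
  unfolding Wt_prod wfk_def by (intro prod_pos ratio_pos[OF assms])

lemma Lf_run:
  assumes "0 \<le> \<epsilon>" "\<epsilon> \<le> 1/4"
  shows "Lf K (Pk m \<epsilon> \<theta>) (Pk m \<epsilon> \<theta>') (run S A P d0 l Alg K \<omega>) = ln (Wt (Pk m \<epsilon> \<theta>) (Pk m \<epsilon> \<theta>') (run S A P d0 l Alg K \<omega>))"
  unfolding Lf_def Wt_prod length_run wfk_def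
  by (rule ln_prod[symmetric]) (simp, metis ratio_pos[OF assms] less_irrefl)

lemma info_a:
  assumes va: "valid_alg S A Alg" and S: "m + 2 \<le> S" and m1: "1 \<le> m" and A0: "0 < A"
    and e: "0 \<le> \<epsilon>" "\<epsilon> \<le> 1/4" and s: "2 \<le> s" "s < m + 2" and a: "a < A" and t: "0 < t"
  shows "(\<integral>\<omega>. Xf K s a (run S A (Pk m \<epsilon> (\<theta>0(s := a))) (d0k m) lk Alg K \<omega>) \<partial>seed_space)
    \<le> (\<integral>\<omega>. Xf K s a (run S A (Pk m \<epsilon> (\<theta>0(s := A))) (d0k m) lk Alg K \<omega>) \<partial>seed_space) + K * t
      + K * kap S A \<epsilon> \<theta>0 m s a * (\<integral>\<omega>. Xf K s a (run S A (Pk m \<epsilon> (\<theta>0(s := A))) (d0k m) lk Alg K \<omega>) \<partial>seed_space) / (2 * t * m)"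
proof -
  interpret SP: prob_space seed_space by (rule prob_seed)
  let ?Q = "Pk m \<epsilon> (\<theta>0(s := A))" and ?P = "Pk m \<epsilon> (\<theta>0(s := a))"
  let ?RQ = "run S A ?Q (d0k m) lk Alg K" and ?RP = "run S A ?P (d0k m) lk Alg K"
  define M where "M \<omega> = Wt ?Q ?P (?RP \<omega>)" for \<omega>
  define y where "y = (\<integral>\<omega>. Xf K s a (?RQ \<omega>) \<partial>seed_space)"
  define x where "x = (\<integral>\<omega>. Xf K s a (?RP \<omega>) \<partial>seed_space)"
  define kp where "kp = kap S A \<epsilon> \<theta>0 m s a"
  have S2: "2 \<le> S" using S by simp
  have sS: "s < S" using s S by simp
  have cm: "\<forall>G B. (\<forall>z h. \<bar>G z h\<bar> \<le> B) \<longrightarrow> goodG K G \<longrightarrow>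
    (\<integral>\<omega>. G (\<omega> (0,0)) (?RQ \<omega>) \<partial>seed_space) = (\<integral>\<omega>. G (\<omega> (0,0)) (?RP \<omega>) * M \<omega> \<partial>seed_space)"
    unfolding M_def by (rule CM[OF va S2 e])
  have pgP: "good_fam K (\<lambda>\<omega>. \<omega> (0,0)) ?RP" and pgQ: "good_fam K (\<lambda>\<omega>. \<omega> (0,0)) ?RQ"
    by (rule pure_good[OF va])+
  have Mm: "M \<in> borel_measurable seed_space" unfolding M_def by (rule Wt_meas[OF pgP])
  have Mpos: "0 < M \<omega>" for \<omega> unfolding M_def by (rule Wt_pos[OF e])
  have Mb: "M \<omega> \<le> 3 ^ K" for \<omega> unfolding M_def using Wt_bnd[OF e, of m "\<theta>0(s := A)" "\<theta>0(s := a)" "?RP \<omega>"] by simp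
  have XPm: "(\<lambda>\<omega>. Xf K s a (?RP \<omega>)) \<in> borel_measurable seed_space" using Xf_good pgP unfolding goodG_def by blast
  have XQm: "(\<lambda>\<omega>. Xf K s a (?RQ \<omega>)) \<in> borel_measurable seed_space" using Xf_good pgQ unfolding goodG_def by blast
  have LPm: "(\<lambda>\<omega>. Lf K ?Q ?P (?RP \<omega>)) \<in> borel_measurable seed_space" using Lf_good pgP unfolding goodG_def by blast
  have LP: "Lf K ?Q ?P (?RP \<omega>) = ln (M \<omega>)" for \<omega> unfolding M_def by (rule Lf_run[OF e])
  have intb: "integrable seed_space f" if "f \<in> borel_measurable seed_space" "\<And>\<omega>. \<bar>f \<omega>\<bar> \<le> B" for f :: "_ \<Rightarrow> real" and B
    by (rule integrable_bnd[OF prob_seed that])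
  have iM: "integrable seed_space M" by (rule intb[OF Mm, of "3^K"]) (use Mpos Mb in \<open>auto simp: abs_of_pos\<close>)
  have iML: "integrable seed_space (\<lambda>\<omega>. M \<omega> * ln (M \<omega>))"
  proof (rule intb[of _ "(3::real)^K * (2 * real K)"])
    show "(\<lambda>\<omega>. M \<omega> * ln (M \<omega>)) \<in> borel_measurable seed_space" using Mm by measurable
    fix \<omega>
    have "\<bar>ln (M \<omega>)\<bar> \<le> 2 * real K" using Lf_bnd[OF e, of K m "\<theta>0(s := A)" "\<theta>0(s := a)" "?RP \<omega>"] LP by simp
    then show "\<bar>M \<omega> * ln (M \<omega>)\<bar> \<le> (3::real)^K * (2 * real K)" unfolding abs_mult using Mpos[of \<omega>] Mb[of \<omega>]
      by (intro mult_mono) auto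
  qed
  have iXP: "integrable seed_space (\<lambda>\<omega>. Xf K s a (?RP \<omega>))" by (rule intb[OF XPm, of K]) (use Xf_bnd in auto)
  have iXPM: "integrable seed_space (\<lambda>\<omega>. Xf K s a (?RP \<omega>) * M \<omega>)"
  proof (rule intb[of _ "real K * (3::real)^K"])
    show "(\<lambda>\<omega>. Xf K s a (?RP \<omega>) * M \<omega>) \<in> borel_measurable seed_space" using XPm Mm by measurable
    fix \<omega> show "\<bar>Xf K s a (?RP \<omega>) * M \<omega>\<bar> \<le> real K * (3::real)^K" unfolding abs_mult
      using Xf_bnd[of K s a "?RP \<omega>"] Mpos[of \<omega>] Mb[of \<omega>] by (intro mult_mono) auto
  qed
  have yi: "y = (\<integral>\<omega>. Xf K s a (?RP \<omega>) * M \<omega> \<partial>seed_space)"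
    unfolding y_def using cm[rule_format, of "\<lambda>z h. Xf K s a h" K] Xf_good Xf_bnd by auto
  have M1: "(\<integral>\<omega>. M \<omega> \<partial>seed_space) = 1"
  proof -
    have g1: "goodG K (\<lambda>z h. 1)" by (simp add: goodG_def)
    have "(\<integral>\<omega>. (1::real) \<partial>seed_space) = (\<integral>\<omega>. 1 * M \<omega> \<partial>seed_space)"
      using cm[rule_format, of "\<lambda>z h. 1" 1] g1 by simp
    then show ?thesis using SP.prob_space by simp
  qed
  have MLn: "(\<integral>\<omega>. M \<omega> * ln (M \<omega>) \<partial>seed_space) = (\<integral>\<omega>. Lf K ?Q ?P (?RQ \<omega>) \<partial>seed_space)"
  proof -
    have "(\<integral>\<omega>. Lf K ?Q ?P (?RQ \<omega>) \<partial>seed_space) = (\<integral>\<omega>. Lf K ?Q ?P (?RP \<omega>) * M \<omega> \<partial>seed_space)"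
      using cm[rule_format, of "\<lambda>z h. Lf K ?Q ?P h" "2 * K"] Lf_good Lf_bnd[OF e] by auto
    then show ?thesis unfolding LP by (simp add: mult.commute)
  qed
  have LQ: "(\<integral>\<omega>. Lf K ?Q ?P (?RQ \<omega>) \<partial>seed_space) = kp / m * y"
  proof -
    have fm: "(\<lambda>\<omega>. ln (wfk ?Q ?P (snd (?RQ \<omega> ! k)))) \<in> borel_measurable seed_space" if "k < K" for k
      by (rule wfk_comp_meas[where g=ln]) (use conjunct2[OF run_meas[OF va that]] in blast)
    have fi: "integrable seed_space (\<lambda>\<omega>. ln (wfk ?Q ?P (snd (?RQ \<omega> ! k))))" if "k < K" for k
      by (rule intb[OF fm[OF that], of 2]) (unfold wfk_def, rule ln_ratio_bnd[OF e])
    have pm: "(\<lambda>\<omega>. fst (?RQ \<omega> ! k) s a) \<in> borel_measurable seed_space" if "k < K" for k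
      using conjunct1[OF run_meas[OF va that]] by blast
    have pb: "\<bar>fst (?RQ \<omega> ! k) s a\<bar> \<le> 1" if "k < K" for k \<omega>
      using pol_bnd[OF run_stoch[OF va that] sS a] by simp
    have pi: "integrable seed_space (\<lambda>\<omega>. fst (?RQ \<omega> ! k) s a)" if "k < K" for k
      by (rule intb[OF pm[OF that], of 1]) (rule pb[OF that])
    have "(\<integral>\<omega>. Lf K ?Q ?P (?RQ \<omega>) \<partial>seed_space) = (\<Sum>k<K. (\<integral>\<omega>. ln (wfk ?Q ?P (snd (?RQ \<omega> ! k))) \<partial>seed_space))"
      unfolding Lf_def by (rule Bochner_Integration.integral_sum) (use fi in auto)
    also have "\<dots> = (\<Sum>k<K. (\<integral>\<omega>. (1 / real m) * fst (?RQ \<omega> ! k) s a * kp \<partial>seed_space))"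
      unfolding kp_def by (intro sum.cong refl KLstep[OF va S m1 A0 e s a]) auto
    also have "\<dots> = (\<Sum>k<K. kp / m * (\<integral>\<omega>. fst (?RQ \<omega> ! k) s a \<partial>seed_space))"
      by (intro sum.cong refl) (simp add: mult_ac)
    also have "\<dots> = kp / m * (\<Sum>k<K. (\<integral>\<omega>. fst (?RQ \<omega> ! k) s a \<partial>seed_space))"
      by (simp add: sum_distrib_left)
    also have "(\<Sum>k<K. (\<integral>\<omega>. fst (?RQ \<omega> ! k) s a \<partial>seed_space)) = (\<integral>\<omega>. (\<Sum>k<K. fst (?RQ \<omega> ! k) s a) \<partial>seed_space)"
      by (rule Bochner_Integration.integral_sum[symmetric]) (use pi in auto)
    also have "\<dots> = y" unfolding y_def by (simp only: Xf_run[OF va sS a])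
    finally show ?thesis .
  qed
  have "x - y = (\<integral>\<omega>. Xf K s a (?RP \<omega>) * (1 - M \<omega>) \<partial>seed_space)"
    unfolding x_def yi using iXP iXPM by (simp add: right_diff_distrib)
  also have "\<dots> \<le> (\<integral>\<omega>. K * ((t * ((2 * M \<omega> + 4) / 3) + (M \<omega> * ln (M \<omega>) - M \<omega> + 1) / t) / 2) \<partial>seed_space)"
  proof (rule integral_mono)
    show "integrable seed_space (\<lambda>\<omega>. Xf K s a (?RP \<omega>) * (1 - M \<omega>))" using iXP iXPM by (simp add: right_diff_distrib)
    show "integrable seed_space (\<lambda>\<omega>. K * ((t * ((2 * M \<omega> + 4) / 3) + (M \<omega> * ln (M \<omega>) - M \<omega> + 1) / t) / 2))"
      using iM iML by (simp add: add_divide_distrib diff_divide_distrib ring_distribs)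
    fix \<omega>
    have p: "\<bar>M \<omega> - 1\<bar> \<le> (t * ((2 * M \<omega> + 4) / 3) + (M \<omega> * ln (M \<omega>) - M \<omega> + 1) / t) / 2"
      by (rule pinsker_t[OF Mpos t])
    have xb: "0 \<le> Xf K s a (?RP \<omega>)" "Xf K s a (?RP \<omega>) \<le> K" using Xf_bnd by auto
    have "Xf K s a (?RP \<omega>) * (1 - M \<omega>) \<le> Xf K s a (?RP \<omega>) * \<bar>M \<omega> - 1\<bar>"
      using xb by (intro mult_left_mono) auto
    also have "\<dots> \<le> K * \<bar>M \<omega> - 1\<bar>" using xb by (intro mult_right_mono) auto
    also have "\<dots> \<le> K * ((t * ((2 * M \<omega> + 4) / 3) + (M \<omega> * ln (M \<omega>) - M \<omega> + 1) / t) / 2)"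
      using p by (intro mult_left_mono) auto
    finally show "Xf K s a (?RP \<omega>) * (1 - M \<omega>) \<le> K * ((t * ((2 * M \<omega> + 4) / 3) + (M \<omega> * ln (M \<omega>) - M \<omega> + 1) / t) / 2)" .
  qed
  also have "\<dots> = (\<integral>\<omega>. (K * (t / 3 - 1 / (2 * t))) * M \<omega> + (K / (2 * t)) * (M \<omega> * ln (M \<omega>)) + K * (2 * t / 3 + 1 / (2 * t)) \<partial>seed_space)"
    using t by (intro Bochner_Integration.integral_cong refl) (simp add: field_simps)
  also have "\<dots> = (K * (t / 3 - 1 / (2 * t))) * (\<integral>\<omega>. M \<omega> \<partial>seed_space) + (K / (2 * t)) * (\<integral>\<omega>. M \<omega> * ln (M \<omega>) \<partial>seed_space) + K * (2 * t / 3 + 1 / (2 * t))"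
    using iM iML SP.prob_space by simp
  also have "\<dots> = K * t + K * kp * y / (2 * t * m)"
    unfolding M1 MLn LQ using t m1 by (simp add: field_simps)
  finally show ?thesis unfolding x_def y_def kp_def by simp
qed



lemma info_sum:
  assumes va: "valid_alg S A Alg" and S: "m + 2 \<le> S" and m1: "1 \<le> m" and A4: "4 \<le> A"
    and e: "0 \<le> \<epsilon>" "\<epsilon> \<le> 1/4" and s: "2 \<le> s" "s < m + 2" and eps: "300 * \<epsilon>^2 * K \<le> A * m"
  shows "(\<Sum>a<A. (\<integral>\<omega>. Xf K s a (run S A (Pk m \<epsilon> (\<theta>0(s := a))) (d0k m) lk Alg K \<omega>) \<partial>seed_space)) \<le> real A * real K / 2"
proof -
  interpret SP: prob_space seed_space by (rule prob_seed)
  let ?RQ = "run S A (Pk m \<epsilon> (\<theta>0(s := A))) (d0k m) lk Alg K"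
  define y where "y a = (\<integral>\<omega>. Xf K s a (?RQ \<omega>) \<partial>seed_space)" for a
  define x where "x a = (\<integral>\<omega>. Xf K s a (run S A (Pk m \<epsilon> (\<theta>0(s := a))) (d0k m) lk Alg K \<omega>) \<partial>seed_space)" for a
  have A0: "0 < A" using A4 by simp
  have sS: "s < S" using s S by simp
  have mpos: "0 < real m" using m1 by simp
  have pgQ: "good_fam K (\<lambda>\<omega>. \<omega> (0,0)) ?RQ" by (rule pure_good[OF va])
  have XQm: "(\<lambda>\<omega>. Xf K s a (?RQ \<omega>)) \<in> borel_measurable seed_space" for a using Xf_good pgQ unfolding goodG_def by blast
  have XQi: "integrable seed_space (\<lambda>\<omega>. Xf K s a (?RQ \<omega>))" for a
    by (rule integrable_bnd[OF prob_seed XQm, of _ K]) (use Xf_bnd in auto)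
  have y0: "0 \<le> y a" for a unfolding y_def using Xf_bnd by (intro integral_nonneg_AE) auto
  have ysum: "(\<Sum>a<A. y a) = K"
  proof -
    have "(\<Sum>a<A. y a) = (\<integral>\<omega>. (\<Sum>a<A. Xf K s a (?RQ \<omega>)) \<partial>seed_space)"
      unfolding y_def by (rule Bochner_Integration.integral_sum[symmetric]) (use XQi in auto)
    also have "\<dots> = (\<integral>\<omega>. real K \<partial>seed_space)"
    proof (rule Bochner_Integration.integral_cong[OF refl])
      fix \<omega>
      have "(\<Sum>a<A. Xf K s a (?RQ \<omega>)) = (\<Sum>a<A. \<Sum>k<K. fst (?RQ \<omega> ! k) s a)"
        by (intro sum.cong refl Xf_run[OF va sS]) auto
      also have "\<dots> = (\<Sum>k<K. \<Sum>a<A. fst (?RQ \<omega> ! k) s a)" by (rule sum.swap)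
      also have "\<dots> = (\<Sum>k<K. 1)"
      proof (intro sum.cong refl)
        fix k assume "k \<in> {..<K}"
        then have "stoch_policy S A (fst (?RQ \<omega> ! k))" using run_stoch[OF va, of k K] by simp
        then show "(\<Sum>a<A. fst (?RQ \<omega> ! k) s a) = 1" using sS by (simp add: stoch_policy_def is_distr_def)
      qed
      finally show "(\<Sum>a<A. Xf K s a (?RQ \<omega>)) = real K" by simp
    qed
    also have "\<dots> = K" using SP.prob_space by simp
    finally show ?thesis .
  qed
  have xa: "x a \<le> y a + K / 10 + 30 * K * \<epsilon>^2 * y a / m" if a: "a < A" for a
  proof -
    have "x a \<le> y a + K * (1/10) + K * kap S A \<epsilon> \<theta>0 m s a * y a / (2 * (1/10) * m)"
      unfolding x_def y_def by (rule info_a[OF va S m1 A0 e s a]) simp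
    also have "K * kap S A \<epsilon> \<theta>0 m s a * y a / (2 * (1/10) * m) \<le> K * (6 * \<epsilon>^2) * y a / (2 * (1/10) * m)"
      using kap_bnd[OF e s a] S y0[of a] mpos by (intro divide_right_mono mult_right_mono mult_left_mono) auto
    finally show ?thesis by (simp add: field_simps)
  qed
  have "(\<Sum>a<A. x a) \<le> (\<Sum>a<A. y a + K / 10 + 30 * K * \<epsilon>^2 * y a / m)"
    by (intro sum_mono xa) simp
  also have "\<dots> = K + A * K / 10 + 30 * K * \<epsilon>^2 * K / m"
    by (simp add: sum.distrib ysum sum_divide_distrib[symmetric] sum_distrib_left[symmetric])
  also have "30 * K * \<epsilon>^2 * K / m \<le> A * K / 10"
  proof -
    have "30 * K * \<epsilon>^2 * K = (K / 10) * (300 * \<epsilon>^2 * K)" by simp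
    also have "\<dots> \<le> (K / 10) * (A * m)" using eps by (intro mult_left_mono) auto
    finally show ?thesis using mpos by (simp add: field_simps)
  qed
  finally have "(\<Sum>a<A. x a) \<le> K + A * K / 10 + A * K / 10" by simp
  also have "\<dots> \<le> A * K / 2"
  proof -
    have "real K * 1 \<le> real K * (3 * real A / 10)" using A4 by (intro mult_left_mono) auto
    then show ?thesis by (simp add: field_simps)
  qed
  finally show ?thesis unfolding x_def by simp
qed



lemma avg_exists:
  fixes f :: "(nat \<Rightarrow> nat) \<Rightarrow> nat \<Rightarrow> real" and B :: real
  assumes C: "finite C" and A0: "0 < A"
    and H: "\<And>s g. s \<in> C \<Longrightarrow> (\<Sum>y<A. f (g(s := y)) s) \<le> A * B"
  shows "\<exists>\<theta>\<in>Pi\<^sub>E C (\<lambda>_. {..<A}). (\<Sum>s\<in>C. f \<theta> s) \<le> card C * B"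
proof (rule ccontr)
  let ?T = "Pi\<^sub>E C (\<lambda>_. {..<A})"
  assume "\<not> ?thesis"
  then have gt: "\<And>\<theta>. \<theta> \<in> ?T \<Longrightarrow> card C * B < (\<Sum>s\<in>C. f \<theta> s)" by (simp add: not_le)
  have fin: "finite ?T" using C by (simp add: finite_PiE)
  have ne: "?T \<noteq> {}" using A0 by (auto simp: PiE_eq_empty_iff)
  have "card ?T * (card C * B) < (\<Sum>\<theta>\<in>?T. \<Sum>s\<in>C. f \<theta> s)"
    using sum_strict_mono[OF fin ne gt] by simp
  also have "\<dots> = (\<Sum>s\<in>C. \<Sum>\<theta>\<in>?T. f \<theta> s)" by (rule sum.swap)
  also have "\<dots> \<le> (\<Sum>s\<in>C. card ?T * B)"
  proof (rule sum_mono)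
    fix s assume s: "s \<in> C"
    let ?T' = "Pi\<^sub>E (C - {s}) (\<lambda>_. {..<A})"
    have Ceq: "C = insert s (C - {s})" using s by auto
    have Teq: "?T = (\<lambda>(y, g). g(s := y)) ` ({..<A} \<times> ?T')"
      by (subst Ceq) (rule PiE_insert_eq)
    have inj: "inj_on (\<lambda>(y, g). g(s := y)) ({..<A} \<times> ?T')"
      using inj_combinator[of s "C - {s}" "\<lambda>_. {..<A}"] by simp
    have cT: "card ?T = A * card ?T'"
      unfolding Teq using card_image[OF inj] by (simp add: card_cartesian_product)
    have "(\<Sum>\<theta>\<in>?T. f \<theta> s) = (\<Sum>p\<in>{..<A} \<times> ?T'. f ((\<lambda>(y, g). g(s := y)) p) s)"
      unfolding Teq by (rule sum.reindex[OF inj, unfolded comp_def])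
    also have "\<dots> = (\<Sum>y<A. \<Sum>g\<in>?T'. f (g(s := y)) s)"
      by (simp add: sum.cartesian_product case_prod_unfold)
    also have "\<dots> = (\<Sum>g\<in>?T'. \<Sum>y<A. f (g(s := y)) s)"
      by (rule sum.swap)
    also have "\<dots> \<le> (\<Sum>g\<in>?T'. A * B)" by (intro sum_mono H[OF s])
    also have "\<dots> = card ?T * B" using cT by simp
    finally show "(\<Sum>\<theta>\<in>?T. f \<theta> s) \<le> card ?T * B" .
  qed
  also have "\<dots> = card ?T * (card C * B)" by simp
  finally show False by simp
qed

lemma lowrank_Pk:
  assumes d2: "2 \<le> d" and e: "0 \<le> \<epsilon>" "\<epsilon> \<le> 1/2"
  shows "low_rank d S A (Pk m \<epsilon> \<theta>)"
proof -
  define phi where "phi s a i = (if i = 0 then Pk m \<epsilon> \<theta> s a 0 else if i = 1 then Pk m \<epsilon> \<theta> s a 1 else 0)" for s a i :: nat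
  define mu where "mu s' i = (if s' = i \<and> i < 2 then 1 else (0::real))" for s' i :: nat
  have h1: "\<forall>s<S. \<forall>a<A. \<forall>s'<S. Pk m \<epsilon> \<theta> s a s' = (\<Sum>i<d. mu s' i * phi s a i)"
  proof (intro allI impI)
    fix s a s'
    have "(\<Sum>i<d. mu s' i * phi s a i) = (\<Sum>i\<in>{0,1}. mu s' i * phi s a i)"
      using d2 by (intro sum.mono_neutral_right) (auto simp: mu_def phi_def)
    also have "\<dots> = Pk m \<epsilon> \<theta> s a s'"
      by (cases "s' = 0"; cases "s' = 1") (auto simp: mu_def phi_def Pk_supp)
    finally show "Pk m \<epsilon> \<theta> s a s' = (\<Sum>i<d. mu s' i * phi s a i)" by simp
  qed
  have h2: "\<forall>s<S. \<forall>a<A. sqrt (\<Sum>i<d. (phi s a i)\<^sup>2) \<le> 1"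
  proof (intro allI impI)
    fix s a
    let ?p = "Pk m \<epsilon> \<theta> s a 0" and ?q = "Pk m \<epsilon> \<theta> s a 1"
    have pq: "0 \<le> ?p" "0 \<le> ?q" "?p + ?q \<le> 1" using e by (auto simp: Pk_def)
    have "(\<Sum>i<d. (phi s a i)\<^sup>2) = (\<Sum>i\<in>{0,1}. (phi s a i)\<^sup>2)"
      using d2 by (intro sum.mono_neutral_right) (auto simp: phi_def)
    also have "\<dots> = ?p^2 + ?q^2" by (simp add: phi_def)
    also have "\<dots> \<le> (?p + ?q)^2" using pq by (simp add: power2_sum)
    also have "\<dots> \<le> 1" using pq by (simp add: power_le_one)
    finally show "sqrt (\<Sum>i<d. (phi s a i)\<^sup>2) \<le> 1" by simp
  qed
  have h3: "\<forall>g :: nat \<Rightarrow> real. (\<forall>s<S. 0 \<le> g s \<and> g s \<le> 1) \<longrightarrow>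
            sqrt (\<Sum>i<d. (\<Sum>s<S. mu s i * g s)\<^sup>2) \<le> sqrt (real d)"
  proof (intro allI impI)
    fix g :: "nat \<Rightarrow> real"
    assume g: "\<forall>s<S. 0 \<le> g s \<and> g s \<le> 1"
    have "(\<Sum>i<d. (\<Sum>s<S. mu s i * g s)\<^sup>2) \<le> (\<Sum>i<d. 1)"
    proof (rule sum_mono)
      fix i
      have "(\<Sum>s<S. mu s i * g s) = (\<Sum>s<S. if s = i then (if i < 2 then g i else 0) else 0)"
        by (intro sum.cong refl) (auto simp: mu_def)
      also have "\<dots> = (if i < S then (if i < 2 then g i else 0) else 0)" by (simp add: sum.delta)
      finally show "(\<Sum>s<S. mu s i * g s)\<^sup>2 \<le> 1" using g by (auto simp: power_le_one)
    qed
    then show "sqrt (\<Sum>i<d. (\<Sum>s<S. mu s i * g s)\<^sup>2) \<le> sqrt (real d)" by simp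
  qed
  show ?thesis unfolding low_rank_def using h1 h2 h3 by blast
qed

lemma valid_Pk:
  assumes S: "m + 2 \<le> S" and m1: "1 \<le> m" and e: "0 \<le> \<epsilon>" "\<epsilon> \<le> 1/2"
  shows "valid_mdp S A (Pk m \<epsilon> \<theta>) (d0k m) lk"
  unfolding valid_mdp_def using Pk_distr[of S \<epsilon>] d0k_distr[OF m1 S] S e by (auto simp: lk_def)



lemma gain_eq:
  assumes "\<forall>s\<in>{2..<m+2}. \<theta> s < A"
  shows "gain m A \<theta> \<pi> = (\<Sum>s\<in>{2..<m+2}. \<pi> s (\<theta> s))"
  unfolding gain_def using assms by (intro sum.cong refl) (simp add: sum.delta')

lemma gain_le:
  assumes S: "m + 2 \<le> S" and st: "stoch_policy S A \<pi>"
  shows "gain m A \<theta> \<pi> \<le> m"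
proof -
  have "gain m A \<theta> \<pi> \<le> (\<Sum>s\<in>{2..<m+2}. \<Sum>a<A. \<pi> s a)"
    unfolding gain_def
  proof (intro sum_mono)
    fix s a assume s: "s \<in> {2..<m+2}" and a: "a \<in> {..<A}"
    have "0 \<le> \<pi> s a" using st s a S by (auto simp: stoch_policy_def is_distr_def)
    then show "(if a = \<theta> s then \<pi> s a else 0) \<le> \<pi> s a" by simp
  qed
  also have "\<dots> = (\<Sum>s\<in>{2..<m+2}. 1)"
    using st S by (intro sum.cong refl) (auto simp: stoch_policy_def is_distr_def)
  finally show ?thesis by simp
qed

lemma regret_lb:
  assumes va: "valid_alg S A Alg" and S: "m + 2 \<le> S" and m1: "1 \<le> m" and A0: "0 < A"
    and e: "0 \<le> \<epsilon>" "\<epsilon> \<le> 1/2" and g: "0 \<le> \<gamma>" "\<gamma> < 1" and th: "\<forall>s\<in>{2..<m+2}. \<theta> s < A"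
  shows "\<gamma> / (1 - \<gamma>) * (\<epsilon> / m) * (\<Sum>s\<in>{2..<m+2}. (K - (\<integral>\<omega>. Xf K s (\<theta> s) (run S A (Pk m \<epsilon> \<theta>) (d0k m) lk Alg K \<omega>) \<partial>seed_space)))
     \<le> regret S A (Pk m \<epsilon> \<theta>) (d0k m) lk \<gamma> Alg K"
proof -
  interpret SP: prob_space seed_space by (rule prob_seed)
  let ?P = "Pk m \<epsilon> \<theta>" and ?C = "{2..<m+2}"
  let ?R = "run S A ?P (d0k m) lk Alg K"
  let ?V = "value_fn S A ?P (d0k m) lk \<gamma>"
  define c1 where "c1 = \<gamma> / (1 - \<gamma>)"
  define Vs where "Vs = (INF pol \<in> {pol. stoch_policy S A pol}. ?V pol)"
  have c10: "0 \<le> c1" using g by (simp add: c1_def)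
  have V: "?V \<pi> = c1 * (1/2 - \<epsilon> / m * gain m A \<theta> \<pi>)" if "stoch_policy S A \<pi>" for \<pi>
    unfolding c1_def by (rule value_formula[OF S that m1 g])
  define ps where "ps s a = (if s \<in> ?C then (if a = \<theta> s then 1 else 0) else (if a = 0 then 1 else (0::real)))" for s a :: nat
  have pst: "stoch_policy S A ps"
    unfolding stoch_policy_def
  proof (intro allI impI)
    fix s assume "s < S"
    have "(\<Sum>i<A. ps s i) = 1"
    proof (cases "s \<in> ?C")
      case True
      then have "ps s = (\<lambda>i. if i = \<theta> s then 1 else 0)" by (intro ext) (simp only: ps_def if_P[OF True] if_True)
      then show ?thesis using th True by (simp add: sum.delta')
    next
      case False
      then have "ps s = (\<lambda>i. if i = 0 then 1 else 0)" by (intro ext) (simp only: ps_def if_not_P[OF False] if_False)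
      then show ?thesis using A0 by (simp add: sum.delta')
    qed
    then show "is_distr A (ps s)" unfolding is_distr_def by (simp add: ps_def)
  qed
  have gps: "gain m A \<theta> ps = m" unfolding gain_eq[OF th] by (simp add: ps_def)
  have Vps: "?V ps = c1 * (1/2 - \<epsilon>)" using V[OF pst] gps m1 by simp
  have bdd: "bdd_below (?V ` {pol. stoch_policy S A pol})"
  proof (rule bdd_belowI[of _ 0])
    fix v assume "v \<in> ?V ` {pol. stoch_policy S A pol}"
    then obtain \<pi> where st: "stoch_policy S A \<pi>" and v: "v = ?V \<pi>" by auto
    have "\<epsilon> / m * gain m A \<theta> \<pi> \<le> \<epsilon> / m * m"
      using gain_le[OF S st] e m1 by (intro mult_left_mono) auto
    moreover have "\<epsilon> / real m * real m = \<epsilon>" using m1 by simp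
    ultimately have "0 \<le> 1/2 - \<epsilon> / m * gain m A \<theta> \<pi>" using e by linarith
    then show "0 \<le> v" using v V[OF st] c10 by simp
  qed
  have Vs_le: "Vs \<le> c1 * (1/2 - \<epsilon>)"
    unfolding Vs_def using cINF_lower[OF bdd, of ps] pst Vps by simp
  have pm: "(\<lambda>\<omega>. Xf K s (\<theta> s) (?R \<omega>)) \<in> borel_measurable seed_space" for s
    using Xf_good pure_good[OF va] unfolding goodG_def by blast
  have pint: "integrable seed_space (\<lambda>\<omega>. Xf K s (\<theta> s) (?R \<omega>))" for s
    by (rule integrable_bnd[OF prob_seed pm, of _ K]) (use Xf_bnd in auto)
  have integrand: "(\<Sum>k<K. ?V (fst (?R \<omega> ! k)) - Vs) =
      K * (c1 / 2 - Vs) - c1 * \<epsilon> / m * (\<Sum>s\<in>?C. Xf K s (\<theta> s) (?R \<omega>))" for \<omega>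
  proof -
    have st: "stoch_policy S A (fst (?R \<omega> ! k))" if "k < K" for k by (rule run_stoch[OF va that])
    have "(\<Sum>k<K. ?V (fst (?R \<omega> ! k)) - Vs) = (\<Sum>k<K. (c1 / 2 - Vs) - c1 * \<epsilon> / m * (\<Sum>s\<in>?C. fst (?R \<omega> ! k) s (\<theta> s)))"
      by (intro sum.cong refl) (simp add: V[OF st] gain_eq[OF th] field_simps)
    also have "\<dots> = (\<Sum>k<K. (c1 / 2 - Vs)) - (\<Sum>k<K. c1 * \<epsilon> / m * (\<Sum>s\<in>?C. fst (?R \<omega> ! k) s (\<theta> s)))"
      by (rule sum_subtractf)
    also have "(\<Sum>k<K. c1 * \<epsilon> / m * (\<Sum>s\<in>?C. fst (?R \<omega> ! k) s (\<theta> s))) = c1 * \<epsilon> / m * (\<Sum>k<K. \<Sum>s\<in>?C. fst (?R \<omega> ! k) s (\<theta> s))"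
      by (rule sum_distrib_left[symmetric])
    also have "(\<Sum>k<K. \<Sum>s\<in>?C. fst (?R \<omega> ! k) s (\<theta> s)) = (\<Sum>s\<in>?C. \<Sum>k<K. fst (?R \<omega> ! k) s (\<theta> s))"
      by (rule sum.swap)
    also have "(\<Sum>k<K. (c1 / 2 - Vs)) = K * (c1 / 2 - Vs)" by simp
    also have "(\<Sum>s\<in>?C. \<Sum>k<K. fst (?R \<omega> ! k) s (\<theta> s)) = (\<Sum>s\<in>?C. Xf K s (\<theta> s) (?R \<omega>))"
      using S th by (intro sum.cong refl Xf_run[OF va, symmetric]) auto
    finally show ?thesis .
  qed
  have "regret S A ?P (d0k m) lk \<gamma> Alg K = (\<integral>\<omega>. K * (c1 / 2 - Vs) - c1 * \<epsilon> / m * (\<Sum>s\<in>?C. Xf K s (\<theta> s) (?R \<omega>)) \<partial>seed_space)"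
    unfolding regret_def Let_def Vs_def[symmetric] integrand ..
  also have "\<dots> = K * (c1 / 2 - Vs) - c1 * \<epsilon> / m * (\<Sum>s\<in>?C. (\<integral>\<omega>. Xf K s (\<theta> s) (?R \<omega>) \<partial>seed_space))"
  proof -
    have "(\<integral>\<omega>. (\<Sum>s\<in>?C. Xf K s (\<theta> s) (?R \<omega>)) \<partial>seed_space) = (\<Sum>s\<in>?C. (\<integral>\<omega>. Xf K s (\<theta> s) (?R \<omega>) \<partial>seed_space))"
      by (rule Bochner_Integration.integral_sum) (rule pint)
    moreover have "integrable seed_space (\<lambda>\<omega>. (\<Sum>s\<in>?C. Xf K s (\<theta> s) (?R \<omega>)))"
      by (rule Bochner_Integration.integrable_sum) (rule pint)
    ultimately show ?thesis using SP.prob_space by simp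
  qed
  also have "\<dots> \<ge> K * (c1 / 2 - c1 * (1/2 - \<epsilon>)) - c1 * \<epsilon> / m * (\<Sum>s\<in>?C. (\<integral>\<omega>. Xf K s (\<theta> s) (?R \<omega>) \<partial>seed_space))"
    using Vs_le by (simp add: mult_left_mono)
  finally have "K * (c1 / 2 - c1 * (1/2 - \<epsilon>)) - c1 * \<epsilon> / m * (\<Sum>s\<in>?C. (\<integral>\<omega>. Xf K s (\<theta> s) (?R \<omega>) \<partial>seed_space))
      \<le> regret S A ?P (d0k m) lk \<gamma> Alg K" .
  moreover have "K * (c1 / 2 - c1 * (1/2 - \<epsilon>)) - c1 * \<epsilon> / m * (\<Sum>s\<in>?C. (\<integral>\<omega>. Xf K s (\<theta> s) (?R \<omega>) \<partial>seed_space))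
      = c1 * (\<epsilon> / m) * (\<Sum>s\<in>?C. (K - (\<integral>\<omega>. Xf K s (\<theta> s) (?R \<omega>) \<partial>seed_space)))"
    using m1 by (simp add: sum_subtractf field_simps)
  ultimately show ?thesis unfolding c1_def by simp
qed



theorem theorem2:
  "\<exists>c>0. \<forall>(d::nat) (S::nat) (A::nat) (K::nat) (\<gamma>::real) (Alg::algorithm).
     8 \<le> d \<longrightarrow> d + 1 \<le> S \<longrightarrow> int A \<ge> int d - 3 \<longrightarrow>
     real K \<ge> 2 * (real d - 4) * real A \<longrightarrow>
     0 \<le> \<gamma> \<longrightarrow> \<gamma> < 1 \<longrightarrow> valid_alg S A Alg \<longrightarrow>
     (\<exists>P d0 l. valid_mdp S A P d0 l \<and> low_rank d S A P \<and>
        regret S A P d0 l \<gamma> Alg K \<ge> c * (\<gamma>\<^sup>2 / (1 - \<gamma>)) * sqrt (real d * real A * real K))"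
proof (intro exI[of _ "1/40"] conjI allI impI)
  show "(0::real) < 1/40" by simp
  fix d S A K :: nat and \<gamma> :: real and Alg :: algorithm
  assume d8: "8 \<le> d" and dS: "d + 1 \<le> S" and dA: "int A \<ge> int d - 3"
    and dK: "real K \<ge> 2 * (real d - 4) * real A" and g0: "0 \<le> \<gamma>" and g1: "\<gamma> < 1"
    and va: "valid_alg S A Alg"
  define m where "m = d - 1"
  define \<epsilon> where "\<epsilon> = sqrt (real A * real m / (300 * real K))"
  have A5: "5 \<le> A" using dA d8 by linarith
  have m7: "7 \<le> m" and m1: "1 \<le> m" using d8 by (simp_all add: m_def)
  have S: "m + 2 \<le> S" using dS d8 by (simp add: m_def)
  have md: "real m = real d - 1" using d8 by (simp add: m_def)
  have K40: "40 \<le> real K"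
  proof -
    have "2 * 4 * 5 \<le> 2 * (real d - 4) * real A" using d8 A5 by (intro mult_mono) auto
    then show ?thesis using dK by simp
  qed
  have Kpos: "0 < real K" using K40 by simp
  have e2: "\<epsilon>^2 = real A * real m / (300 * real K)" unfolding \<epsilon>_def using Kpos by simp
  have e0: "0 \<le> \<epsilon>" unfolding \<epsilon>_def by simp
  have e14: "\<epsilon> \<le> 1/4"
  proof -
    have "16 * (real A * real m) \<le> 16 * (real A * (2 * (real d - 4)))"
      using md d8 by (intro mult_left_mono) auto
    also have "\<dots> = 16 * (2 * (real d - 4) * real A)" by simp
    also have "\<dots> \<le> 16 * real K" using dK by simp
    also have "\<dots> \<le> 300 * real K" using Kpos by simp
    finally have "real A * real m / (300 * real K) \<le> (1/4)^2"
      using Kpos by (simp add: field_simps)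
    then have "\<epsilon>^2 \<le> (1/4)^2" using e2 by simp
    then show ?thesis by (rule power2_le_imp_le) simp
  qed
  have e12: "\<epsilon> \<le> 1/2" using e14 by simp
  have eps: "300 * \<epsilon>^2 * K \<le> A * m" using e2 Kpos by simp
  let ?C = "{2..<m+2}"
  define f where "f \<theta> s = (\<integral>\<omega>. Xf K s (\<theta> s) (run S A (Pk m \<epsilon> \<theta>) (d0k m) lk Alg K \<omega>) \<partial>seed_space)" for \<theta> s
  have "\<exists>\<theta>\<in>Pi\<^sub>E ?C (\<lambda>_. {..<A}). (\<Sum>s\<in>?C. f \<theta> s) \<le> card ?C * (real K / 2)"
  proof (rule avg_exists)
    fix s g assume s: "s \<in> ?C"
    have "(\<Sum>y<A. f (g(s := y)) s) = (\<Sum>y<A. (\<integral>\<omega>. Xf K s y (run S A (Pk m \<epsilon> (g(s := y))) (d0k m) lk Alg K \<omega>) \<partial>seed_space))"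
      by (simp add: f_def)
    also have "\<dots> \<le> real A * real K / 2"
      using s by (intro info_sum[OF va S m1 _ e0 e14 _ _ eps]) (use A5 in auto)
    finally show "(\<Sum>y<A. f (g(s := y)) s) \<le> real A * (real K / 2)" by simp
  qed (use A5 in auto)
  then obtain \<theta> where th: "\<theta> \<in> Pi\<^sub>E ?C (\<lambda>_. {..<A})" and fs: "(\<Sum>s\<in>?C. f \<theta> s) \<le> real m * (real K / 2)"
    by auto
  have thA: "\<forall>s\<in>?C. \<theta> s < A" using th by (auto simp: PiE_iff)
  define c1 where "c1 = \<gamma> / (1 - \<gamma>)"
  have c10: "0 \<le> c1" using g0 g1 by (simp add: c1_def)
  have reg: "c1 * (\<epsilon> / m) * (\<Sum>s\<in>?C. (K - f \<theta> s)) \<le> regret S A (Pk m \<epsilon> \<theta>) (d0k m) lk \<gamma> Alg K"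
    unfolding c1_def f_def using regret_lb[OF va S m1 _ e0 e12 g0 g1 thA] A5 by simp
  have q1: "(\<Sum>s\<in>?C. (real K - f \<theta> s)) = (\<Sum>s\<in>?C. real K) - (\<Sum>s\<in>?C. f \<theta> s)" by (rule sum_subtractf)
  have q2: "(\<Sum>s\<in>?C. real K) = real m * real K" by simp
  have sumge: "real m * (real K / 2) \<le> (\<Sum>s\<in>?C. (K - f \<theta> s))" using fs q1 q2 by linarith
  have low: "c1 * (\<epsilon> * real K / 2) \<le> c1 * (\<epsilon> / m) * (\<Sum>s\<in>?C. (K - f \<theta> s))"
  proof -
    have "c1 * (\<epsilon> / m) * (real m * (real K / 2)) \<le> c1 * (\<epsilon> / m) * (\<Sum>s\<in>?C. (K - f \<theta> s))"
      using sumge c10 e0 by (intro mult_left_mono) auto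
    then show ?thesis using m1 by simp
  qed
  have X: "sqrt (real d * real A * real K) \<le> 20 * (\<epsilon> * real K)"
  proof (rule power2_le_imp_le)
    have "(sqrt (real d * real A * real K))^2 = real d * real A * real K" by simp
    also have "\<dots> \<le> (4/3) * real m * real A * real K"
      using md d8 by (intro mult_right_mono) auto
    also have "\<dots> = 400 * (real A * real m / (300 * real K)) * (real K)^2"
      using Kpos by (simp add: field_simps power2_eq_square)
    also have "\<dots> = (20 * (\<epsilon> * real K))^2"
      unfolding e2[symmetric] by (simp add: power_mult_distrib)
    finally show "(sqrt (real d * real A * real K))^2 \<le> (20 * (\<epsilon> * real K))^2" .
    show "0 \<le> 20 * (\<epsilon> * real K)" using e0 by simp
  qed
  have gg: "\<gamma>\<^sup>2 / (1 - \<gamma>) \<le> c1"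
    unfolding c1_def using g0 g1 by (intro divide_right_mono) (auto simp: power2_eq_square mult_le_cancel_right1 intro: mult_left_le_one_le)
  have "1/40 * (\<gamma>\<^sup>2 / (1 - \<gamma>)) * sqrt (real d * real A * real K) \<le> 1/40 * c1 * sqrt (real d * real A * real K)"
    by (intro mult_right_mono mult_left_mono gg) auto
  also have "\<dots> \<le> 1/40 * c1 * (20 * (\<epsilon> * real K))" using X c10 by (intro mult_left_mono) auto
  also have "\<dots> = c1 * (\<epsilon> * real K / 2)" by simp
  also have "\<dots> \<le> regret S A (Pk m \<epsilon> \<theta>) (d0k m) lk \<gamma> Alg K" using low reg by linarith
  finally have R: "1/40 * (\<gamma>\<^sup>2 / (1 - \<gamma>)) * sqrt (real d * real A * real K) \<le> regret S A (Pk m \<epsilon> \<theta>) (d0k m) lk \<gamma> Alg K" .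
  have d2: "2 \<le> d" using d8 by simp
  show "\<exists>P d0 l. valid_mdp S A P d0 l \<and> low_rank d S A P \<and>
        regret S A P d0 l \<gamma> Alg K \<ge> 1/40 * (\<gamma>\<^sup>2 / (1 - \<gamma>)) * sqrt (real d * real A * real K)"
    using valid_Pk[OF S m1 e0 e12, of A \<theta>] lowrank_Pk[OF d2 e0 e12, of S A m \<theta>] R by blast
qed


end
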